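(* Every real member of the pencil $|D_{\rm L}|$, $D_{\rm L}=r_1+\dots+r_n$, contains exactly one point $q$ of the central circle $\Sigma^\sigma_n$, and $q$ is not a multiple point of that member.
   Context: Fix $n\ge2$, reals $a_1<\dots<a_{2n}$, $f(z)=\prod(z-a_i)$. $\Sigma$ is the hyperelliptic curve $v^2=f(z)$ in the total space of $\mathscr O_{\mathbb{P}^1}(n)$ (equivalently, in the cone over a rational normal curve $\Lambda\subset\mathbb{P}^n$ of degree $n$), of genus $n-1$, with double covering $\pi:\Sigma\to\mathbb{P}^1$, $(v,z)\mapsto z$, ramification points $r_i$ over $a_i$, and real structure $\sigma(v,z)=((-1)^n\bar v,\bar z)$. $|D_{\rm L}|$ is a pencil (with $D_{\rm L}\sim r_{n+1}+\dots+r_{2n}$), and it carries the real structure induced by $\sigma$; real members are $\sigma$-invariant members. The central circle is $\Sigma^\sigma_n:=\pi^{-1}([a_n,a_{n+1}])$, which is pointwise fixed by $\sigma$. *)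

theory Defs
  imports "HOL-Complex_Analysis.Complex_Analysis" "HOL-Computational_Algebra.Polynomial"
begin

text \<open>Points of the compact hyperelliptic curve Sigma: v^2 = f(z) in the total space of O(n).
  Aff v z is the point with fibre coordinate v over z in the affine chart; Inf u is the point
  over z = infinity with fibre coordinate u = v w^n, w = 1/z (so u = 1 or u = -1).\<close>
datatype spt = Aff complex complex | Inf complex

definition hf :: "nat \<Rightarrow> (nat \<Rightarrow> real) \<Rightarrow> complex \<Rightarrow> complex" where
  "hf n a z = (\<Prod>i=1..2*n. z - complex_of_real (a i))"

definition Sigma_pts :: "nat \<Rightarrow> (nat \<Rightarrow> real) \<Rightarrow> spt set" where
  "Sigma_pts n a = {Aff v z | v z. v ^ 2 = hf n a z} \<union> {Inf 1, Inf (-1)}"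

text \<open>Explicit local uniformizing parameter t at each point, returning the affine
  coordinates (v,z) of the point with parameter t (for t near 0, t \<noteq> 0 at infinity).\<close>
fun chart :: "nat \<Rightarrow> (nat \<Rightarrow> real) \<Rightarrow> spt \<Rightarrow> complex \<Rightarrow> complex \<times> complex" where
  "chart n a (Aff v0 z0) =
     (if v0 \<noteq> 0 then (\<lambda>t. (v0 * csqrt (hf n a (z0 + t) / v0 ^ 2), z0 + t))
      else (\<lambda>t. let J = {j \<in> {1..2*n}. complex_of_real (a j) \<noteq> z0};
                    c = (\<Prod>j\<in>J. z0 - complex_of_real (a j));
                    hh = (\<Prod>j\<in>J. z0 + t ^ 2 - complex_of_real (a j))
                in (t * csqrt c * csqrt (hh / c), z0 + t ^ 2)))"
| "chart n a (Inf u0) =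
     (\<lambda>t. (u0 * csqrt (\<Prod>j=1..2*n. 1 - complex_of_real (a j) * t) / t ^ n, 1 / t))"

text \<open>Rational functions on Sigma: every element of C(z)[v]/(v^2 - f) is (P0(z) + P1(z) v)/Q(z).\<close>
type_synonym rfun = "complex poly \<times> complex poly \<times> complex poly"

fun rf_eval :: "rfun \<Rightarrow> complex \<times> complex \<Rightarrow> complex" where
  "rf_eval (P0, P1, Q) (v, z) = (poly P0 z + poly P1 z * v) / poly Q z"

fun rf_nonzero :: "rfun \<Rightarrow> bool" where
  "rf_nonzero (P0, P1, Q) \<longleftrightarrow> Q \<noteq> 0 \<and> (P0 \<noteq> 0 \<or> P1 \<noteq> 0)"

definition ord_at :: "nat \<Rightarrow> (nat \<Rightarrow> real) \<Rightarrow> rfun \<Rightarrow> spt \<Rightarrow> int" where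
  "ord_at n a \<phi> p = zorder (\<lambda>t. rf_eval \<phi> (chart n a p t)) 0"

definition div_of :: "nat \<Rightarrow> (nat \<Rightarrow> real) \<Rightarrow> rfun \<Rightarrow> spt \<Rightarrow> int" where
  "div_of n a \<phi> p = (if p \<in> Sigma_pts n a then ord_at n a \<phi> p else 0)"

definition ram_pt :: "(nat \<Rightarrow> real) \<Rightarrow> nat \<Rightarrow> spt" where
  "ram_pt a i = Aff 0 (complex_of_real (a i))"

definition D_L :: "nat \<Rightarrow> (nat \<Rightarrow> real) \<Rightarrow> spt \<Rightarrow> int" where
  "D_L n a p = (if p \<in> ram_pt a ` {1..n} then 1 else 0)"

definition pencil_members :: "nat \<Rightarrow> (nat \<Rightarrow> real) \<Rightarrow> (spt \<Rightarrow> int) set" where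
  "pencil_members n a = {D. (\<forall>p. 0 \<le> D p) \<and>
      (\<exists>\<phi>. rf_nonzero \<phi> \<and> D = (\<lambda>p. D_L n a p + div_of n a \<phi> p))}"

fun sigma_pt :: "nat \<Rightarrow> spt \<Rightarrow> spt" where
  "sigma_pt n (Aff v z) = Aff ((-1) ^ n * cnj v) (cnj z)"
| "sigma_pt n (Inf u) = Inf ((-1) ^ n * cnj u)"

definition real_members :: "nat \<Rightarrow> (nat \<Rightarrow> real) \<Rightarrow> (spt \<Rightarrow> int) set" where
  "real_members n a = {D \<in> pencil_members n a. \<forall>p. D (sigma_pt n p) = D p}"

definition central_circle :: "nat \<Rightarrow> (nat \<Rightarrow> real) \<Rightarrow> spt set" where
  "central_circle n a = {p \<in> Sigma_pts n a. \<exists>v z. p = Aff v z \<and> z \<in> \<real> \<and>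
      a n \<le> Re z \<and> Re z \<le> a (n + 1)}"

end

theory Submission
  imports Defs "HOL-Computational_Algebra.Fundamental_Theorem_Algebra"
begin

definition lf :: "complex \<Rightarrow> complex poly" where "lf c = [:- c, 1:]"
definition gpoly :: "(nat\<Rightarrow>real) \<Rightarrow> nat set \<Rightarrow> complex poly" where
  "gpoly a I = (\<Prod>i\<in>I. lf (complex_of_real (a i)))"

lemma poly_lf[simp]: "poly (lf c) z = z - c"
  by (simp add: lf_def)

lemma lf_nz[simp]: "lf c \<noteq> 0"
  by (simp add: lf_def)

lemma degree_lf[simp]: "degree (lf c) = 1"
  by (simp add: lf_def)

lemma order_lf: "order z (lf c) = (if z = c then 1 else 0)"
proof (cases "z = c")
  case True
  then show ?thesis using order_power_n_n[of z 1] by (simp add: lf_def)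
next
  case False
  then show ?thesis by (simp add: order_0I)
qed

lemma poly_gpoly: "poly (gpoly a I) z = (\<Prod>i\<in>I. z - complex_of_real (a i))"
  by (simp add: gpoly_def poly_prod)

lemma gpoly_nz[simp]: "gpoly a I \<noteq> 0"
  by (cases "finite I") (auto simp: gpoly_def)

lemma order_gpoly: "finite I \<Longrightarrow> order z (gpoly a I) = card {i\<in>I. complex_of_real (a i) = z}"
proof (induction I rule: finite_induct)
  case empty
  then show ?case by (simp add: gpoly_def order_0I)
next
  case (insert i I)
  have "gpoly a (insert i I) = lf (complex_of_real (a i)) * gpoly a I"
    using insert by (simp add: gpoly_def)
  then have "order z (gpoly a (insert i I)) = order z (lf (complex_of_real (a i))) + order z (gpoly a I)"
    by (simp add: order_mult)
  moreover have "{j\<in>insert i I. complex_of_real (a j) = z} =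
     (if complex_of_real (a i) = z then insert i {j\<in>I. complex_of_real (a j) = z} else {j\<in>I. complex_of_real (a j) = z})"
    by auto
  moreover have "card (insert i {j\<in>I. complex_of_real (a j) = z}) = Suc (card {j\<in>I. complex_of_real (a j) = z})"
    using insert by simp
  ultimately show ?case using insert.IH unfolding order_lf by (cases "complex_of_real (a i) = z") auto
qed

lemma degree_gpoly: "finite I \<Longrightarrow> degree (gpoly a I) = card I"
proof (induction I rule: finite_induct)
  case empty
  then show ?case by (simp add: gpoly_def)
next
  case (insert i I)
  have "gpoly a (insert i I) = lf (complex_of_real (a i)) * gpoly a I"
    using insert by (simp add: gpoly_def)
  then show ?case using insert by (simp add: degree_mult_eq)
qed

lemma gpoly_split: "finite I \<Longrightarrow> i \<in> I \<Longrightarrow> gpoly a I = lf (complex_of_real (a i)) * gpoly a (I - {i})"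
  unfolding gpoly_def by (simp add: prod.remove)

lemma gpoly_union: "finite I \<Longrightarrow> finite J \<Longrightarrow> I \<inter> J = {} \<Longrightarrow> gpoly a (I \<union> J) = gpoly a I * gpoly a J"
  unfolding gpoly_def by (simp add: prod.union_disjoint)

lemma has_root_if_degree:
  fixes Q :: "complex poly"
  assumes "degree Q > 0" shows "\<exists>r. poly Q r = 0"
proof (rule fundamental_theorem_of_algebra)
  show "\<not> constant (poly Q)"
    using assms by (simp add: constant_degree)
qed

lemma dvd_by_orders:
  fixes P Q :: "complex poly"
  assumes "Q \<noteq> 0" "\<forall>z. order z Q \<le> order z P"
  shows "Q dvd P"
  using assms
proof (induction "degree Q" arbitrary: Q P rule: less_induct)
  case less
  show ?case
  proof (cases "degree Q = 0")
    case True
    then obtain c where "Q = [:c:]" by (metis degree_eq_zeroE)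
    with less.prems have "c \<noteq> 0" by auto
    then show ?thesis using \<open>Q = [:c:]\<close> using is_unit_triv[of c] unit_imp_dvd by blast
  next
    case False
    then obtain r where r: "poly Q r = 0" using has_root_if_degree by blast
    then have "lf r dvd Q" by (simp add: lf_def dvd_iff_poly_eq_0)
    then obtain Q' where Q': "Q = lf r * Q'" by (elim dvdE)
    show ?thesis
    proof (cases "P = 0")
      case True then show ?thesis by simp
    next
      case False
      have "order r Q \<noteq> 0" using r less.prems(1) by (simp add: order_root)
      then have "order r P \<noteq> 0" using less.prems(2) by (metis le_zero_eq)
      then have "poly P r = 0" by (simp add: order_root)
      then have "lf r dvd P" by (simp add: lf_def dvd_iff_poly_eq_0)
      then obtain P' where P': "P = lf r * P'" by (elim dvdE)
      have Q'nz: "Q' \<noteq> 0" using Q' less.prems(1) by auto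
      have P'nz: "P' \<noteq> 0" using P' False by auto
      have "degree Q = 1 + degree Q'" using Q' Q'nz by (simp add: degree_mult_eq)
      then have dl: "degree Q' < degree Q" by simp
      have "\<forall>z. order z Q' \<le> order z P'"
      proof
        fix z
        have "order z Q = order z (lf r) + order z Q'" using Q' Q'nz by (simp add: order_mult)
        moreover have "order z P = order z (lf r) + order z P'" using P' P'nz by (simp add: order_mult)
        ultimately show "order z Q' \<le> order z P'" using less.prems(2) by (metis add_le_cancel_left)
      qed
      then have "Q' dvd P'" using less.hyps[OF dl Q'nz] by blast
      then show ?thesis using P' Q' by simp
    qed
  qed
qed

lemma ev_poly_nz_at:
  fixes R :: "complex poly"
  assumes "R \<noteq> 0"
  shows "eventually (\<lambda>w. poly R w \<noteq> 0) (at z0)"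
proof -
  have "finite {w. poly R w = 0}" using poly_roots_finite[OF assms] .
  then obtain d where d: "d > 0" "\<forall>x\<in>{w. poly R w = 0}. x \<noteq> z0 \<longrightarrow> d \<le> dist z0 x"
    using finite_set_avoid by blast
  show ?thesis unfolding eventually_at
    using d by (metis dist_commute linorder_not_less mem_Collect_eq)
qed

lemma ev_poly_nz_inf:
  fixes R :: "complex poly"
  assumes "R \<noteq> 0"
  shows "eventually (\<lambda>w. poly R w \<noteq> 0) at_infinity"
proof -
  have "finite {w. poly R w = 0}" using poly_roots_finite[OF assms] .
  then have "bounded {w. poly R w = 0}" by (rule finite_imp_bounded)
  then obtain B where B: "\<forall>x\<in>{w. poly R w = 0}. norm x \<le> B"
    by (auto simp: bounded_iff)
  show ?thesis unfolding eventually_at_infinity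
    by (rule exI[of _ "B + 1"]) (use B in force)
qed

lemma rat_order_bound:
  fixes P Q :: "complex poly"
  assumes P: "P \<noteq> 0" and Q: "Q \<noteq> 0"
    and ev: "eventually (\<lambda>z. norm (poly P z / poly Q z) * norm (z - z0) ^ m \<le> C) (at z0)"
  shows "order z0 Q \<le> order z0 P + m"
proof (rule ccontr)
  assume H: "\<not> order z0 Q \<le> order z0 P + m"
  obtain P' where P': "P = lf z0 ^ order z0 P * P'" "\<not> lf z0 dvd P'"
    using order_decomp[OF P, of z0] by (auto simp: lf_def)
  obtain Q' where Q': "Q = lf z0 ^ order z0 Q * Q'" "\<not> lf z0 dvd Q'"
    using order_decomp[OF Q, of z0] by (auto simp: lf_def)
  have P'0: "poly P' z0 \<noteq> 0" using P'(2) by (simp add: lf_def dvd_iff_poly_eq_0)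
  have Q'0: "poly Q' z0 \<noteq> 0" using Q'(2) by (simp add: lf_def dvd_iff_poly_eq_0)
  define d where "d = order z0 Q - order z0 P - m"
  have d1: "d \<ge> 1" and bq: "order z0 Q = order z0 P + m + d" using H by (auto simp: d_def)
  define k where "k = (\<lambda>z. norm (poly P' z / poly Q' z))"
  have ev2: "eventually (\<lambda>z. k z \<le> C * norm (z - z0) ^ d) (at z0)"
    using ev eventually_at_ball'[of 1 z0 UNIV, OF zero_less_one]
  proof eventually_elim
    case (elim z)
    then have nz: "norm (z - z0) > 0" by auto
    have "poly P z / poly Q z = (z - z0) ^ order z0 P * poly P' z / ((z - z0) ^ (order z0 P + m + d) * poly Q' z)"
      by (subst P'(1), subst Q'(1), subst bq) (simp add: poly_power)
    also have "\<dots> = poly P' z / ((z - z0) ^ (m + d) * poly Q' z)"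
      using nz by (simp add: power_add field_simps)
    finally have "norm (poly P z / poly Q z) * norm (z - z0) ^ m = k z / norm (z - z0) ^ d"
      using nz by (simp add: k_def norm_divide norm_mult norm_power power_add field_simps)
    with elim(1) have "k z / norm (z - z0) ^ d \<le> C" by simp
    then show ?case using nz by (simp add: divide_le_eq mult.commute)
  qed
  have "isCont k z0" unfolding k_def using Q'0 by (intro continuous_intros) auto
  then have lim1: "(k \<longlongrightarrow> k z0) (at z0)" by (simp add: isCont_def)
  have "((\<lambda>z. C * norm (z - z0) ^ d) \<longlongrightarrow> C * norm (z0 - z0) ^ d) (at z0)"
    by (intro tendsto_intros)
  then have lim2: "((\<lambda>z. C * norm (z - z0) ^ d) \<longlongrightarrow> 0) (at z0)" using d1 by (simp add: zero_power)
  have "k z0 \<le> 0" using tendsto_le[OF _ lim2 lim1 ev2] by simp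
  moreover have "k z0 > 0" using P'0 Q'0 by (simp add: k_def)
  ultimately show False by simp
qed

lemma order_lf0_pow_mult:
  fixes r :: "complex poly"
  assumes "poly r 0 \<noteq> 0"
  shows "order 0 (lf 0 ^ d * r) = d"
proof -
  have "r \<noteq> 0" using assms by auto
  then have "order 0 (lf 0 ^ d * r) = order 0 (lf 0 ^ d) + order 0 r"
    by (intro order_mult) auto
  moreover have "order 0 (lf 0 ^ d) = d" using order_power_n_n[of 0 d] by (simp add: lf_def)
  moreover have "order 0 r = 0" using assms by (simp add: order_0I)
  ultimately show ?thesis by simp
qed

lemma rat_inf_bound:
  fixes P Q :: "complex poly"
  assumes P: "P \<noteq> 0" and Q: "Q \<noteq> 0"
    and ev: "eventually (\<lambda>t. norm (poly P (1/t) / poly Q (1/t)) \<le> C) (at 0)"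
  shows "degree P \<le> degree Q"
proof -
  define P2 where "P2 = lf 0 ^ degree Q * reflect_poly P"
  define Q2 where "Q2 = lf 0 ^ degree P * reflect_poly Q"
  have rP: "poly (reflect_poly P) 0 \<noteq> 0" using P by (simp add: poly_0_coeff_0)
  have rQ: "poly (reflect_poly Q) 0 \<noteq> 0" using Q by (simp add: poly_0_coeff_0)
  have P2: "P2 \<noteq> 0" using rP by (auto simp: P2_def)
  have Q2: "Q2 \<noteq> 0" using rQ by (auto simp: Q2_def)
  have "eventually (\<lambda>t. norm (poly P2 t / poly Q2 t) * norm (t - 0) ^ 0 \<le> C) (at 0)"
    using ev eventually_at_ball'[of 1 0 UNIV, OF zero_less_one]
  proof eventually_elim
    case (elim t)
    then have t0: "t \<noteq> 0" by auto
    have "poly P (1/t) = poly (reflect_poly P) t / t ^ degree P"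
      using poly_reflect_poly_nz[OF t0, of P] t0 by (simp add: field_simps inverse_eq_divide)
    moreover have "poly Q (1/t) = poly (reflect_poly Q) t / t ^ degree Q"
      using poly_reflect_poly_nz[OF t0, of Q] t0 by (simp add: field_simps inverse_eq_divide)
    ultimately have "poly P (1/t) / poly Q (1/t) = (poly (reflect_poly P) t / t ^ degree P) / (poly (reflect_poly Q) t / t ^ degree Q)"
      by simp
    also have "\<dots> = poly P2 t / poly Q2 t"
      by (simp add: P2_def Q2_def poly_power lf_def divide_divide_times_eq mult.commute)
    finally have "poly P (1/t) / poly Q (1/t) = poly P2 t / poly Q2 t" .
    then show ?case using elim by simp
  qed
  from rat_order_bound[OF P2 Q2 this] show ?thesis
    unfolding P2_def Q2_def using order_lf0_pow_mult[OF rP] order_lf0_pow_mult[OF rQ] by simp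
qed

lemma ev_shift_to:
  fixes z0 :: complex
  assumes "eventually (\<lambda>t. Phi (z0 + t)) (at 0)"
  shows "eventually Phi (at z0)"
  using assms by (simp add: eventually_at_to_0[of _ z0] add.commute)

lemma ev_square_to:
  fixes z0 :: complex
  assumes "eventually (\<lambda>t. Phi (z0 + t^2) (norm t ^ 2)) (at 0)"
  shows "eventually (\<lambda>z. Phi z (norm (z - z0))) (at z0)"
proof -
  obtain r where r: "r > 0" "\<forall>t. t \<noteq> 0 \<and> dist t 0 < r \<longrightarrow> Phi (z0 + t^2) (norm t ^ 2)"
    using assms unfolding eventually_at by blast
  show ?thesis unfolding eventually_at
  proof (intro exI[of _ "r^2"] conjI ballI impI)
    show "r^2 > 0" using r by simp
    fix z assume "z \<in> UNIV" and z: "z \<noteq> z0 \<and> dist z z0 < r^2"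
    define t where "t = csqrt (z - z0)"
    have t2: "t^2 = z - z0" by (simp add: t_def)
    have nt: "norm t ^ 2 = norm (z - z0)" by (metis norm_power t2)
    have "t \<noteq> 0" using z t2 by auto
    moreover have "norm t < r"
    proof -
      have "norm t ^ 2 < r ^ 2" using z nt by (simp add: dist_norm)
      then show ?thesis using r(1) by (simp add: power_less_imp_less_base)
    qed
    ultimately have "Phi (z0 + t^2) (norm t ^ 2)" using r(2) by simp
    then show "Phi z (norm (z - z0))" using t2 nt by simp
  qed
qed

lemma zorder_cong_ev:
  assumes ev: "eventually (\<lambda>w. f w = g w) (at z)"
  shows "zorder f z = zorder g z"
proof -
  obtain d where d: "d > 0" "\<forall>w. w \<noteq> z \<and> dist w z < d \<longrightarrow> f w = g w"
    using ev unfolding eventually_at by auto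
  have key: "(\<exists>h r. r>0 \<and> h holomorphic_on cball z r \<and> h z\<noteq>0
                   \<and> (\<forall>w\<in>cball z r - {z}. f1 w = h w * (w-z) powi n \<and> h w \<noteq>0))"
    if H: "(\<exists>h r. r>0 \<and> h holomorphic_on cball z r \<and> h z\<noteq>0
                   \<and> (\<forall>w\<in>cball z r - {z}. f2 w = h w * (w-z) powi n \<and> h w \<noteq>0))"
      and E: "\<forall>w. w \<noteq> z \<and> dist w z < d \<longrightarrow> f1 w = f2 w" for f1 f2 n
  proof -
    obtain h r where hr: "r>0" "h holomorphic_on cball z r" "h z\<noteq>0"
         "\<forall>w\<in>cball z r - {z}. f2 w = h w * (w-z) powi n \<and> h w \<noteq>0" using H by blast
    define r' where "r' = min r (d/2)"
    have "r' > 0" using hr d by (simp add: r'_def)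
    moreover have "h holomorphic_on cball z r'"
      using hr(2) by (rule holomorphic_on_subset) (auto simp: r'_def)
    moreover have "\<forall>w\<in>cball z r' - {z}. f1 w = h w * (w-z) powi n \<and> h w \<noteq>0"
    proof
      fix w assume w: "w \<in> cball z r' - {z}"
      then have "w \<in> cball z r - {z}" by (auto simp: r'_def)
      moreover have "w \<noteq> z \<and> dist w z < d" using w d by (auto simp: r'_def dist_commute)
      ultimately show "f1 w = h w * (w-z) powi n \<and> h w \<noteq>0" using hr(4) E by auto
    qed
    ultimately show ?thesis using hr(3) by blast
  qed
  have d': "\<forall>w. w \<noteq> z \<and> dist w z < d \<longrightarrow> g w = f w" using d by auto
  show ?thesis unfolding zorder_def
    by (rule arg_cong[where f = The], rule ext, rule iffI) (use key d d' in blast)+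
qed

lemma zorder_eqI_ev:
  assumes "h analytic_on {z}" "h z \<noteq> 0"
    and ev: "eventually (\<lambda>w. f w = h w * (w - z) powi n) (at z)"
  shows "zorder f z = n"
proof -
  obtain r where r: "r > 0" "h holomorphic_on ball z r"
    using assms(1) analytic_on_def by auto
  have "zorder (\<lambda>w. h w * (w - z) powi n) z = n"
    by (rule zorder_eqI[OF open_ball _ r(2) assms(2)]) (use r in auto)
  moreover have "zorder f z = zorder (\<lambda>w. h w * (w - z) powi n) z"
    by (rule zorder_cong_ev[OF ev])
  ultimately show ?thesis by simp
qed

lemma bound_from_zorder:
  fixes F :: "complex \<Rightarrow> complex"
  assumes mero: "F meromorphic_on {0}" and fr: "frequently (\<lambda>t. F t \<noteq> 0) (at 0)"
    and zo: "zorder F 0 \<ge> - int m"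
  shows "\<exists>C. eventually (\<lambda>t. norm (F t) * norm t ^ m \<le> C) (at 0)"
proof -
  have iso: "isolated_singularity_at F 0" and ness: "not_essential F 0"
    using mero by (simp_all add: meromorphic_at_iff)
  obtain r where r: "r > 0" "zor_poly F 0 holomorphic_on cball 0 r"
     "\<forall>w\<in>cball 0 r - {0}. F w = zor_poly F 0 w * (w - 0) powi zorder F 0"
    using zorder_exist[OF iso ness fr] by blast
  define r' where "r' = min r 1"
  have "continuous_on (cball 0 r') (zor_poly F 0)"
    using r(2) by (rule holomorphic_on_imp_continuous_on[OF holomorphic_on_subset]) (auto simp: r'_def)
  then have "compact ((zor_poly F 0) ` cball 0 r')"
    by (rule compact_continuous_image) simp
  then obtain M where M: "\<forall>w\<in>cball 0 r'. norm (zor_poly F 0 w) \<le> M"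
    using compact_imp_bounded bounded_iff by (metis imageI)
  have "eventually (\<lambda>t. norm (F t) * norm t ^ m \<le> M) (at 0)"
    unfolding eventually_at
  proof (intro exI[of _ r'] conjI ballI impI)
    show "r' > 0" using r by (simp add: r'_def)
    fix t :: complex assume "t \<in> UNIV" and t: "t \<noteq> 0 \<and> dist t 0 < r'"
    then have tc: "t \<in> cball 0 r' - {0}" "t \<in> cball 0 r - {0}" by (auto simp: r'_def)
    have nt: "norm t \<le> 1" "norm t > 0" using t by (auto simp: r'_def)
    define k where "k = zorder F 0"
    have km: "k + int m \<ge> 0" using zo by (simp add: k_def)
    have "norm (F t) * norm t ^ m = norm (zor_poly F 0 t) * (norm t powi k * norm t ^ m)"
      using r(3) tc(2) by (simp add: k_def norm_mult norm_power_int)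
    also have "norm t powi k * norm t ^ m = norm t ^ nat (k + int m)"
    proof -
      have "norm t powi k * norm t ^ m = norm t powi k * norm t powi (int m)"
        by (simp add: power_int_of_nat)
      also have "\<dots> = norm t powi (k + int m)"
        using nt by (simp add: power_int_add)
      also have "\<dots> = norm t ^ nat (k + int m)"
        using km by (metis int_nat_eq power_int_of_nat)
      finally show ?thesis .
    qed
    also have "norm t ^ nat (k + int m) \<le> 1" using nt by (simp add: power_le_one)
    finally have "norm (F t) * norm t ^ m \<le> norm (zor_poly F 0 t) * 1"
      by (smt (verit, best) mult_left_mono norm_ge_zero)
    moreover have "norm (zor_poly F 0 t) \<le> M" using M tc(1) by blast
    ultimately show "norm (F t) * norm t ^ m \<le> M" by linarith
  qed
  then show ?thesis by blast
qed

lemma mero_poly: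
  assumes "g meromorphic_on A"
  shows "(\<lambda>t. poly P (g t)) meromorphic_on A"
proof (induction P)
  case (pCons c p)
  have "(\<lambda>t. c + g t * poly p (g t)) meromorphic_on A"
    using pCons assms by (intro meromorphic_intros)
  then show ?case by simp
qed (simp add: meromorphic_on_const)

definition fpoly :: "nat \<Rightarrow> (nat \<Rightarrow> real) \<Rightarrow> complex poly" where "fpoly n a = gpoly a {1..2*n}"
definition gp :: "nat \<Rightarrow> (nat \<Rightarrow> real) \<Rightarrow> complex poly" where "gp n a = gpoly a {1..n}"
definition hp :: "nat \<Rightarrow> (nat \<Rightarrow> real) \<Rightarrow> complex poly" where "hp n a = gpoly a {n+1..2*n}"

lemma poly_fpoly: "poly (fpoly n a) z = hf n a z"
  by (simp add: fpoly_def hf_def poly_gpoly)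

lemma fpoly_split: "fpoly n a = gp n a * hp n a"
proof -
  have e: "{1..2*n} = {1..n} \<union> {n+1..2*n}" by auto
  have "gpoly a ({1..n} \<union> {n+1..2*n}) = gpoly a {1..n} * gpoly a {n+1..2*n}"
    by (rule gpoly_union) auto
  then show ?thesis unfolding fpoly_def gp_def hp_def by (simp only: e)
qed

lemma hf_split: "hf n a z = poly (gp n a) z * poly (hp n a) z"
  by (metis fpoly_split poly_fpoly poly_mult)

lemma analytic_poly_comp [analytic_intros]:
  assumes "g analytic_on A"
  shows "(\<lambda>t. poly P (g t)) analytic_on A"
proof (induction P)
  case (pCons c p)
  have "(\<lambda>t. c + g t * poly p (g t)) analytic_on A"
    by (rule analytic_on_add[OF analytic_on_const analytic_on_mult[OF assms pCons.IH]])
  then show ?case by simp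
qed simp

lemma rf_eval_alt: "rf_eval (P0, P1, Q) x = (poly P0 (snd x) + poly P1 (snd x) * fst x) / poly Q (snd x)"
  by (cases x) simp

lemma a_less: "strict_mono_on {1..2*(n::nat)} (a::nat\<Rightarrow>real) \<Longrightarrow> i \<in> {1..2*n} \<Longrightarrow> j \<in> {1..2*n} \<Longrightarrow> i < j \<Longrightarrow> a i < a j"
  by (simp add: strict_mono_onD)

lemma a_inj:
  assumes "strict_mono_on {1..2*(n::nat)} (a::nat\<Rightarrow>real)" "i \<in> {1..2*n}" "j \<in> {1..2*n}" "a i = a j"
  shows "i = j"
proof (rule linorder_cases[of i j])
  assume "i < j"
  then have "a i < a j" using a_less[OF assms(1-3)] by blast
  with assms(4) show ?thesis by simp
next
  assume "j < i"
  then have "a j < a i" using a_less[OF assms(1,3,2)] by blast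
  with assms(4) show ?thesis by simp
qed

lemma a_inj_c: "strict_mono_on {1..2*(n::nat)} (a::nat\<Rightarrow>real) \<Longrightarrow> i \<in> {1..2*n} \<Longrightarrow> j \<in> {1..2*n} \<Longrightarrow>
   complex_of_real (a i) = complex_of_real (a j) \<Longrightarrow> i = j"
  using a_inj of_real_eq_iff by blast

lemma hf_zero_iff: "hf n a z = 0 \<longleftrightarrow> (\<exists>i\<in>{1..2*n}. z = complex_of_real (a i))"
  by (simp add: hf_def)

lemma order_gpoly_at:
  assumes "strict_mono_on {1..2*n} a" "I \<subseteq> {1..2*n}" "i \<in> {1..2*n}"
  shows "order (complex_of_real (a i)) (gpoly a I) = (if i \<in> I then 1 else 0)"
proof -
  have fin: "finite I" using assms(2) finite_subset by blast
  have "j = i" if "j \<in> I" "a j = a i" for j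
    using that a_inj[OF assms(1)] assms(2,3) by blast
  then have "{j\<in>I. complex_of_real (a j) = complex_of_real (a i)} = (if i \<in> I then {i} else {})"
    by auto
  then show ?thesis using order_gpoly[OF fin] by simp
qed

lemma order_fpoly_root:
  assumes "strict_mono_on {1..2*n} a" "i \<in> {1..2*n}"
  shows "order (complex_of_real (a i)) (fpoly n a) = 1"
  using order_gpoly_at[OF assms(1) _ assms(2), of "{1..2*n}"] assms by (simp add: fpoly_def)

lemma order_gp_root:
  assumes "strict_mono_on {1..2*n} a" "i \<in> {1..2*n}"
  shows "order (complex_of_real (a i)) (gp n a) = (if i \<le> n then 1 else 0)"
  using order_gpoly_at[OF assms(1) _ assms(2), of "{1..n}"] assms by (auto simp: gp_def)

lemma order_fpoly_nonroot: "hf n a z \<noteq> 0 \<Longrightarrow> order z (fpoly n a) = 0"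
  by (simp add: order_0I poly_fpoly)

lemma fpoly_nz[simp]: "fpoly n a \<noteq> 0" by (simp add: fpoly_def)
lemma gp_nz[simp]: "gp n a \<noteq> 0" by (simp add: gp_def)
lemma hp_nz[simp]: "hp n a \<noteq> 0" by (simp add: hp_def)

lemma parity:
  fixes P0 P1 :: "complex poly"
  assumes sm: "strict_mono_on {1..2*n} a" and n: "n \<ge> 1"
    and eq: "P0 * P0 = P1 * P1 * fpoly n a"
  shows "P0 = 0 \<and> P1 = 0"
proof (cases "P1 = 0")
  case True
  then show ?thesis using eq by simp
next
  case False
  then have nz: "P1 * P1 * fpoly n a \<noteq> 0" by simp
  then have P0: "P0 \<noteq> 0" using eq by auto
  have i1: "1 \<in> {1..2*n}" using n by simp
  have "order (complex_of_real (a 1)) (P0 * P0) = 2 * order (complex_of_real (a 1)) P0"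
    using P0 by (simp add: order_mult)
  moreover have "order (complex_of_real (a 1)) (P1 * P1 * fpoly n a) = 2 * order (complex_of_real (a 1)) P1 + 1"
    using nz False order_fpoly_root[OF sm i1] by (simp add: order_mult)
  ultimately have "2 * order (complex_of_real (a 1)) P0 = 2 * order (complex_of_real (a 1)) P1 + 1"
    using eq by simp
  then have False by presburger
  then show ?thesis ..
qed

definition rc :: "nat \<Rightarrow> (nat \<Rightarrow> real) \<Rightarrow> complex \<Rightarrow> complex" where
  "rc n a z = (\<Prod>j\<in>{j \<in> {1..2*n}. complex_of_real (a j) \<noteq> z}. z - complex_of_real (a j))"
definition rhh :: "nat \<Rightarrow> (nat \<Rightarrow> real) \<Rightarrow> complex \<Rightarrow> complex \<Rightarrow> complex" where
  "rhh n a z t = (\<Prod>j\<in>{j \<in> {1..2*n}. complex_of_real (a j) \<noteq> z}. z + t^2 - complex_of_real (a j))"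
definition rs :: "nat \<Rightarrow> (nat \<Rightarrow> real) \<Rightarrow> complex \<Rightarrow> complex \<Rightarrow> complex" where
  "rs n a z t = csqrt (rc n a z) * csqrt (rhh n a z t / rc n a z)"

lemma chart_B_eq: "chart n a (Aff 0 z) t = (t * rs n a z t, z + t^2)"
  by (simp add: rs_def rc_def rhh_def Let_def)

lemma chart_A_eq: "v \<noteq> 0 \<Longrightarrow> chart n a (Aff v z) t = (v * csqrt (hf n a (z + t) / v ^ 2), z + t)"
  by simp

lemma chartB_fst: "fst (chart n a (Aff 0 z) t) = t * rs n a z t"
  by (simp add: chart_B_eq del: chart.simps)
lemma chartB_snd: "snd (chart n a (Aff 0 z) t) = z + t^2"
  by (simp add: chart_B_eq del: chart.simps)
lemma chartA_fst: "v \<noteq> 0 \<Longrightarrow> fst (chart n a (Aff v z) t) = v * csqrt (hf n a (z + t) / v ^ 2)"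
  by simp
lemma chartA_snd: "v \<noteq> 0 \<Longrightarrow> snd (chart n a (Aff v z) t) = z + t"
  by simp

lemma rc_nz: "rc n a z \<noteq> 0"
  unfolding rc_def by (subst prod_zero_iff) auto

lemma rhh0: "rhh n a z 0 = rc n a z"
  by (simp add: rhh_def rc_def)

lemma rs_analytic: "rs n a z analytic_on {0}"
proof -
  have "(\<lambda>t. rhh n a z t / rc n a z) analytic_on {0}"
    unfolding rhh_def using rc_nz by (intro analytic_intros) auto
  moreover have "rhh n a z 0 / rc n a z \<notin> \<real>\<^sub>\<le>\<^sub>0" using rc_nz by (simp add: rhh0)
  ultimately have "(\<lambda>t. csqrt (rhh n a z t / rc n a z)) analytic_on {0}"
    by (metis analytic_on_csqrt' singletonD)
  then show ?thesis unfolding rs_def by (rule analytic_on_mult[OF analytic_on_const])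
qed

lemma rs0: "rs n a z 0 \<noteq> 0"
  using rc_nz by (simp add: rs_def rhh0)

lemma rs_even: "rs n a z (-t) = rs n a z t"
  by (simp add: rs_def rhh_def)

lemma chartA_analytic:
  assumes "v \<noteq> 0" "v^2 = hf n a z"
  shows "(\<lambda>t. v * csqrt (hf n a (z + t) / v ^ 2)) analytic_on {0}"
proof -
  have "(\<lambda>t. hf n a (z + t) / v ^ 2) analytic_on {0}"
    unfolding hf_def using assms by (intro analytic_intros) auto
  moreover have "hf n a (z + 0) / v ^ 2 \<notin> \<real>\<^sub>\<le>\<^sub>0" using assms by (simp add: assms(2)[symmetric])
  ultimately have "(\<lambda>t. csqrt (hf n a (z + t) / v ^ 2)) analytic_on {0}"
    by (metis analytic_on_csqrt' singletonD)
  then show ?thesis by (rule analytic_on_mult[OF analytic_on_const])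
qed

lemma chartA0: "v \<noteq> 0 \<Longrightarrow> v^2 = hf n a z \<Longrightarrow> v * csqrt (hf n a (z + 0) / v ^ 2) = v"
  by (metis add_0_right csqrt_1 divide_self_if mult.right_neutral power_not_zero)

lemma hf_at_root:
  assumes sm: "strict_mono_on {1..2*n} a" and i: "i \<in> {1..2*n}" and z: "z = complex_of_real (a i)"
  shows "hf n a (z + t^2) = t^2 * rhh n a z t"
proof -
  have J: "{j \<in> {1..2*n}. complex_of_real (a j) \<noteq> z} = {1..2*n} - {i}"
    using a_inj_c[OF sm] i z by auto
  have "hf n a (z + t^2) = (z + t^2 - complex_of_real (a i)) * (\<Prod>j\<in>{1..2*n} - {i}. z + t^2 - complex_of_real (a j))"
    unfolding hf_def using i by (simp add: prod.remove)
  then show ?thesis using J z by (simp add: rhh_def)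
qed

lemma sigma_cases:
  assumes "p \<in> Sigma_pts n a"
  obtains (A) v z where "p = Aff v z" "v^2 = hf n a z" "v \<noteq> 0"
    | (B) i where "i \<in> {1..2*n}" "p = Aff 0 (complex_of_real (a i))"
    | (C) u where "p = Inf u" "u = 1 \<or> u = -1"
proof -
  consider (aff) v z where "p = Aff v z" "v^2 = hf n a z" | (inf) u where "p = Inf u" "u = 1 \<or> u = -1"
    using assms unfolding Sigma_pts_def by blast
  then show ?thesis
  proof cases
    case aff
    show ?thesis
    proof (cases "v = 0")
      case True
      then have "hf n a z = 0" using aff by simp
      then obtain i where "i \<in> {1..2*n}" "z = complex_of_real (a i)" using hf_zero_iff by blast
      then show ?thesis using B aff True by blast
    next
      case False then show ?thesis using A aff by blast
    qed
  next
    case inf then show ?thesis using C by blast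
  qed
qed

lemma chart_sq:
  assumes sm: "strict_mono_on {1..2*n} a" and p: "p \<in> Sigma_pts n a" and t: "t \<noteq> 0"
  shows "(fst (chart n a p t))^2 = hf n a (snd (chart n a p t))"
  using p
proof (cases rule: sigma_cases)
  case (A v z)
  have "(v * csqrt (hf n a (z + t) / v ^ 2))^2 = hf n a (z + t)" using A(3) by (simp add: power_mult_distrib)
  then show ?thesis by (simp only: A(1) chartA_fst[OF A(3)] chartA_snd[OF A(3)])
next
  case (B i)
  let ?z = "complex_of_real (a i)"
  have "(t * rs n a ?z t)^2 = t^2 * rhh n a ?z t"
    using rc_nz[of n a ?z] by (simp add: rs_def power_mult_distrib)
  then show ?thesis using B hf_at_root[OF sm B(1) refl, of t] by (simp only: chartB_snd chartB_fst)
next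
  case (C u)
  have u2: "u^2 = 1" using C(2) by auto
  have "hf n a (1/t) = (\<Prod>j=1..2*n. (1 - complex_of_real (a j) * t) / t)"
    unfolding hf_def using t by (intro prod.cong) (auto simp: field_simps)
  also have "\<dots> = (\<Prod>j=1..2*n. 1 - complex_of_real (a j) * t) / t ^ (2*n)"
    by (simp add: prod_dividef)
  finally have "hf n a (1/t) = (\<Prod>j=1..2*n. 1 - complex_of_real (a j) * t) / t ^ (2*n)" .
  moreover have "(u * csqrt (\<Prod>j=1..2*n. 1 - complex_of_real (a j) * t) / t ^ n)^2 =
      (\<Prod>j=1..2*n. 1 - complex_of_real (a j) * t) / t ^ (2*n)"
    using u2 by (simp add: power_mult_distrib power_divide power_mult[symmetric] mult.commute)
  ultimately show ?thesis using C by simp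
qed

lemma ev_poly_chart_nz:
  assumes p: "p \<in> Sigma_pts n a" and R: "R \<noteq> 0"
  shows "eventually (\<lambda>t. poly R (snd (chart n a p t)) \<noteq> 0) (at 0)"
  using p
proof (cases rule: sigma_cases)
  case (A v z)
  have "eventually (\<lambda>w. poly R w \<noteq> 0) (at z)" by (rule ev_poly_nz_at[OF R])
  then have "eventually (\<lambda>t. poly R (t + z) \<noteq> 0) (at 0)"
    by (simp add: eventually_at_to_0[of _ z])
  then show ?thesis using A by (simp add: add.commute)
next
  case (B i)
  let ?z = "complex_of_real (a i)"
  have "filterlim (\<lambda>t. ?z + t^2) (at ?z) (at (0::complex))"
  proof (rule filterlim_atI)
    show "((\<lambda>t. ?z + t^2) \<longlongrightarrow> ?z) (at (0::complex))"
      by (rule tendsto_eq_intros) (auto intro!: tendsto_eq_intros)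
    show "eventually (\<lambda>t. ?z + t^2 \<noteq> ?z) (at (0::complex))"
      by (auto simp: eventually_at_filter)
  qed
  from eventually_compose_filterlim[OF ev_poly_nz_at[OF R] this]
  show ?thesis using B by (simp only: chartB_snd)
next
  case (C u)
  have "filterlim (\<lambda>t::complex. 1/t) at_infinity (at 0)"
    using filterlim_inverse_at_infinity by (simp add: inverse_eq_divide[symmetric])
  from eventually_compose_filterlim[OF ev_poly_nz_inf[OF R] this]
  show ?thesis using C by simp
qed

lemma chart_mero:
  assumes sm: "strict_mono_on {1..2*n} a" and p: "p \<in> Sigma_pts n a"
  shows "(\<lambda>t. fst (chart n a p t)) meromorphic_on {0} \<and> (\<lambda>t. snd (chart n a p t)) meromorphic_on {0}"
  using p
proof (cases rule: sigma_cases)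
  case (A v z)
  have "(\<lambda>t. v * csqrt (hf n a (z + t) / v ^ 2)) analytic_on {0}" by (rule chartA_analytic) (use A in auto)
  moreover have "(\<lambda>t. z + t) analytic_on {0}" by (intro analytic_intros)
  moreover have "(\<lambda>t. fst (chart n a p t)) = (\<lambda>t. v * csqrt (hf n a (z + t) / v ^ 2))"
    "(\<lambda>t. snd (chart n a p t)) = (\<lambda>t. z + t)" by (simp_all only: A(1) chartA_fst[OF A(3)] chartA_snd[OF A(3)])
  ultimately show ?thesis by (metis analytic_on_imp_meromorphic_on)
next
  case (B i)
  have "(\<lambda>t. t * rs n a (complex_of_real (a i)) t) analytic_on {0}"
    by (rule analytic_on_mult[OF analytic_on_ident rs_analytic])
  moreover have "(\<lambda>t. complex_of_real (a i) + t^2) analytic_on {0}" by (intro analytic_intros)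
  moreover have "(\<lambda>t. fst (chart n a p t)) = (\<lambda>t. t * rs n a (complex_of_real (a i)) t)"
    "(\<lambda>t. snd (chart n a p t)) = (\<lambda>t. complex_of_real (a i) + t^2)" by (simp_all only: B(2) chartB_fst chartB_snd)
  ultimately show ?thesis by (metis analytic_on_imp_meromorphic_on)
next
  case (C u)
  have "(\<lambda>t. (\<Prod>j=1..2*n. 1 - complex_of_real (a j) * t)) analytic_on {0}" by (intro analytic_intros)
  moreover have "(\<Prod>j=1..2*n. 1 - complex_of_real (a j) * 0) \<notin> \<real>\<^sub>\<le>\<^sub>0" by simp
  ultimately have "(\<lambda>t. csqrt (\<Prod>j=1..2*n. 1 - complex_of_real (a j) * t)) analytic_on {0}"
    by (metis analytic_on_csqrt' singletonD)
  then have "(\<lambda>t. u * csqrt (\<Prod>j=1..2*n. 1 - complex_of_real (a j) * t)) analytic_on {0}"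
    by (rule analytic_on_mult[OF analytic_on_const])
  then have "(\<lambda>t. u * csqrt (\<Prod>j=1..2*n. 1 - complex_of_real (a j) * t)) meromorphic_on {0}"
    by (rule analytic_on_imp_meromorphic_on)
  moreover have "(\<lambda>t::complex. t ^ n) meromorphic_on {0}"
    by (rule analytic_on_imp_meromorphic_on) (intro analytic_intros)
  ultimately have m1: "(\<lambda>t. u * csqrt (\<Prod>j=1..2*n. 1 - complex_of_real (a j) * t) / t ^ n) meromorphic_on {0}"
    by (rule meromorphic_on_divide)
  have m2: "(\<lambda>t::complex. 1 / t) meromorphic_on {0}"
    by (rule meromorphic_on_divide) (rule meromorphic_on_const, rule meromorphic_on_id)
  have e1: "(\<lambda>t. fst (chart n a p t)) = (\<lambda>t. u * csqrt (\<Prod>j=1..2*n. 1 - complex_of_real (a j) * t) / t ^ n)"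
    using C(1) by simp
  have e2: "(\<lambda>t. snd (chart n a p t)) = (\<lambda>t::complex. 1 / t)"
    using C(1) by simp
  show ?thesis unfolding e1 e2 using m1 m2 by blast
qed

lemma F_mero:
  assumes sm: "strict_mono_on {1..2*n} a" and p: "p \<in> Sigma_pts n a"
  shows "(\<lambda>t. rf_eval (P0, P1, Q) (chart n a p t)) meromorphic_on {0}"
proof -
  have "(\<lambda>t. (poly P0 (snd (chart n a p t)) + poly P1 (snd (chart n a p t)) * fst (chart n a p t)) /
       poly Q (snd (chart n a p t))) meromorphic_on {0}"
  proof -
    have m1: "(\<lambda>t. fst (chart n a p t)) meromorphic_on {0}" and m2: "(\<lambda>t. snd (chart n a p t)) meromorphic_on {0}"
      using chart_mero[OF sm p] by blast+
    show ?thesis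
      by (intro meromorphic_on_divide meromorphic_on_add meromorphic_on_mult mero_poly m1 m2)
  qed
  then show ?thesis by (simp only: rf_eval_alt)
qed

lemma F_freq:
  assumes sm: "strict_mono_on {1..2*n} a" and n: "n \<ge> 1" and p: "p \<in> Sigma_pts n a"
    and nz: "rf_nonzero (P0, P1, Q)"
  shows "frequently (\<lambda>t. rf_eval (P0, P1, Q) (chart n a p t) \<noteq> 0) (at 0)"
proof -
  define Pi where "Pi = P0 * P0 - P1 * P1 * fpoly n a"
  have Q: "Q \<noteq> 0" and P01: "P0 \<noteq> 0 \<or> P1 \<noteq> 0" using nz by auto
  have "Pi \<noteq> 0"
  proof
    assume "Pi = 0"
    then have "P0 * P0 = P1 * P1 * fpoly n a" unfolding Pi_def by (rule right_minus_eq[THEN iffD1])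
    then have "P0 = 0 \<and> P1 = 0" by (rule parity[OF sm n])
    then show False using P01 by blast
  qed
  then have R: "Pi * Q \<noteq> 0" using Q by simp
  have "eventually (\<lambda>t. rf_eval (P0, P1, Q) (chart n a p t) \<noteq> 0) (at 0)"
    using ev_poly_chart_nz[OF p R] eventually_at_ball'[of 1 0 UNIV, OF zero_less_one]
  proof eventually_elim
    case (elim t)
    define v where "v = fst (chart n a p t)"
    define z where "z = snd (chart n a p t)"
    have t0: "t \<noteq> 0" using elim by auto
    have sq: "v^2 = hf n a z" unfolding v_def z_def by (rule chart_sq[OF sm p t0])
    have hv: "hf n a z = v * v" using sq by (simp add: power2_eq_square)
    have "poly Pi z = poly P0 z * poly P0 z - poly P1 z * poly P1 z * hf n a z"
      by (simp add: Pi_def poly_fpoly)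
    also have "\<dots> = (poly P0 z + poly P1 z * v) * (poly P0 z - poly P1 z * v)"
      unfolding hv by (simp add: algebra_simps)
    finally have e: "poly Pi z = (poly P0 z + poly P1 z * v) * (poly P0 z - poly P1 z * v)" .
    have "poly (Pi * Q) z \<noteq> 0" using elim(1) by (simp add: z_def)
    then have "poly Pi z \<noteq> 0" "poly Q z \<noteq> 0" by auto
    then have "(poly P0 z + poly P1 z * v) / poly Q z \<noteq> 0" using e by auto
    then show ?case by (simp add: rf_eval_alt v_def z_def)
  qed
  then show ?thesis using eventually_frequently trivial_limit_at by blast
qed

lemma DL_A: "v \<noteq> 0 \<Longrightarrow> D_L n a (Aff v z) = 0"
  by (auto simp: D_L_def ram_pt_def)

lemma DL_inf: "D_L n a (Inf u) = 0"
  by (auto simp: D_L_def ram_pt_def)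

lemma DL_ram:
  assumes sm: "strict_mono_on {1..2*n} a" and i: "i \<in> {1..2*n}"
  shows "D_L n a (ram_pt a i) = (if i \<le> n then 1 else 0)"
proof -
  have "ram_pt a i \<in> ram_pt a ` {1..n} \<longleftrightarrow> i \<le> n"
  proof
    assume "ram_pt a i \<in> ram_pt a ` {1..n}"
    then obtain j where j: "j \<in> {1..n}" "a i = a j" by (auto simp: ram_pt_def)
    then have "i = j" using a_inj[OF sm i, of j] by auto
    then show "i \<le> n" using j by simp
  next
    assume "i \<le> n" then show "ram_pt a i \<in> ram_pt a ` {1..n}" using i by auto
  qed
  then show ?thesis by (simp add: D_L_def)
qed

lemma ev_reflect:
  assumes "eventually P (at (0::complex))"
  shows "eventually (\<lambda>t. P (-t)) (at 0)"
proof -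
  obtain d where d: "d > 0" "\<forall>x\<in>UNIV. x \<noteq> 0 \<and> dist x 0 < d \<longrightarrow> P x"
    using assms unfolding eventually_at by blast
  show ?thesis unfolding eventually_at
    by (rule exI[of _ d]) (use d in \<open>auto simp: dist_norm\<close>)
qed

lemma alg_id:
  assumes sq: "v^2 = hf n a z"
  shows "rf_eval (P0,P1,Q) (v,z) + rf_eval (P0,P1,Q) (-v,z) = 2 * (poly P0 z / poly Q z)"
    and "(rf_eval (P0,P1,Q) (v,z) - rf_eval (P0,P1,Q) (-v,z))^2 =
           4 * (poly (P1*P1*fpoly n a) z / poly (Q*Q) z)"
proof -
  show "rf_eval (P0,P1,Q) (v,z) + rf_eval (P0,P1,Q) (-v,z) = 2 * (poly P0 z / poly Q z)"
    by (simp add: add_divide_distrib[symmetric])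
  have "rf_eval (P0,P1,Q) (v,z) - rf_eval (P0,P1,Q) (-v,z) = 2 * poly P1 z * v / poly Q z"
    by (simp add: diff_divide_distrib[symmetric])
  then have "(rf_eval (P0,P1,Q) (v,z) - rf_eval (P0,P1,Q) (-v,z))^2 = 4 * (poly P1 z)^2 * v^2 / (poly Q z)^2"
    by (simp add: power_divide power_mult_distrib)
  also have "\<dots> = 4 * (poly (P1*P1*fpoly n a) z / poly (Q*Q) z)"
    using sq by (simp add: poly_fpoly power2_eq_square)
  finally show "(rf_eval (P0,P1,Q) (v,z) - rf_eval (P0,P1,Q) (-v,z))^2 =
           4 * (poly (P1*P1*fpoly n a) z / poly (Q*Q) z)" .
qed

lemma RW_bound:
  fixes V Z :: "complex \<Rightarrow> complex"
  assumes e1: "\<forall>\<^sub>F t in at 0. norm (rf_eval (P0,P1,Q) (V t, Z t)) * norm t ^ m \<le> C1"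
      and e2: "\<forall>\<^sub>F t in at 0. norm (rf_eval (P0,P1,Q) (- V t, Z t)) * norm t ^ m \<le> C2"
      and e3: "\<forall>\<^sub>F t in at 0. (V t)^2 = hf n a (Z t)"
  shows "\<forall>\<^sub>F t in at 0. norm (poly P0 (Z t) / poly Q (Z t)) * norm t ^ m \<le> (C1 + C2) / 2 \<and>
           norm (poly (P1*P1*fpoly n a) (Z t) / poly (Q*Q) (Z t)) * norm t ^ (2*m) \<le> ((C1 + C2)/2)^2"
  using e1 e2 e3
proof eventually_elim
  case (elim t)
  define F where "F = rf_eval (P0,P1,Q) (V t, Z t)"
  define G where "G = rf_eval (P0,P1,Q) (- V t, Z t)"
  define T where "T = norm t ^ m"
  have T0: "T \<ge> 0" by (simp add: T_def)
  have i1: "F + G = 2 * (poly P0 (Z t) / poly Q (Z t))" unfolding F_def G_def by (rule alg_id(1)[OF elim(3)])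
  have i2: "(F - G)^2 = 4 * (poly (P1*P1*fpoly n a) (Z t) / poly (Q*Q) (Z t))"
    unfolding F_def G_def by (rule alg_id(2)[OF elim(3)])
  have b1: "norm F * T \<le> C1" "norm G * T \<le> C2" using elim(1,2) by (simp_all add: F_def G_def T_def)
  have "norm (poly P0 (Z t) / poly Q (Z t)) * T = norm (F + G) * T / 2"
    unfolding i1 by (simp add: norm_mult norm_divide)
  also have "\<dots> \<le> (norm F * T + norm G * T) / 2"
    using T0 norm_triangle_ineq[of F G] by (simp add: mult_right_mono distrib_right[symmetric] divide_right_mono)
  also have "\<dots> \<le> (C1 + C2) / 2" using b1 by simp
  finally have r1: "norm (poly P0 (Z t) / poly Q (Z t)) * T \<le> (C1 + C2) / 2" .
  have tt: "norm t ^ (2*m) = T^2" unfolding T_def by (metis power_mult mult.commute)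
  have ww: "poly (P1*P1*fpoly n a) (Z t) / poly (Q*Q) (Z t) = (F - G)^2 / 4" using i2 by simp
  have "norm (poly (P1*P1*fpoly n a) (Z t) / poly (Q*Q) (Z t)) * norm t ^ (2*m) = norm (F - G)^2 / 4 * T^2"
    unfolding tt ww by (simp add: norm_divide norm_power)
  also have "\<dots> = (norm (F - G) * T / 2)^2"
    by (simp add: power_mult_distrib power_divide)
  also have "\<dots> \<le> ((C1 + C2)/2)^2"
  proof (rule power_mono)
    have "norm (F - G) * T \<le> norm F * T + norm G * T"
      using T0 norm_triangle_ineq4[of F G] by (simp add: mult_right_mono distrib_right[symmetric])
    then show "norm (F - G) * T / 2 \<le> (C1 + C2) / 2" using b1 by simp
    show "0 \<le> norm (F - G) * T / 2" using T0 by simp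
  qed
  finally show ?case using r1 by (simp add: T_def)
qed

lemma bound_pt:
  assumes sm: "strict_mono_on {1..2*n} a" and n: "n \<ge> 1" and nz: "rf_nonzero (P0,P1,Q)"
    and p: "p \<in> Sigma_pts n a"
    and pos: "0 \<le> D_L n a p + ord_at n a (P0,P1,Q) p" and dl: "D_L n a p = int m"
  shows "\<exists>C. \<forall>\<^sub>F t in at 0. norm (rf_eval (P0,P1,Q) (chart n a p t)) * norm t ^ m \<le> C"
proof (rule bound_from_zorder[OF F_mero[OF sm p] F_freq[OF sm n p nz]])
  show "- int m \<le> zorder (\<lambda>t. rf_eval (P0, P1, Q) (chart n a p t)) 0"
    using pos dl by (simp add: ord_at_def)
qed

lemma degree_fpoly: "degree (fpoly n a) = 2 * n"
  by (simp add: fpoly_def degree_gpoly)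
lemma degree_gp: "degree (gp n a) = n"
  by (simp add: gp_def degree_gpoly)

lemma order_sq: "P \<noteq> 0 \<Longrightarrow> order z (P * P) = 2 * order z P"
  by (simp add: order_mult)

lemma key_gen:
  fixes P0 P1 Q :: "complex poly"
  assumes sm: "strict_mono_on {1..2*n} a" and n: "n \<ge> 1" and nz: "rf_nonzero (P0,P1,Q)"
    and pos: "\<And>p. p \<in> Sigma_pts n a \<Longrightarrow> 0 \<le> D_L n a p + ord_at n a (P0,P1,Q) p"
    and z0: "hf n a z0 \<noteq> 0"
  shows "(P0 \<noteq> 0 \<longrightarrow> order z0 Q \<le> order z0 P0) \<and> (P1 \<noteq> 0 \<longrightarrow> order z0 Q \<le> order z0 P1)"
proof -
  have Q: "Q \<noteq> 0" using nz by simp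
  define v0 where "v0 = csqrt (hf n a z0)"
  have v0: "v0 \<noteq> 0" "v0^2 = hf n a z0" using z0 by (auto simp: v0_def)
  have p: "Aff v0 z0 \<in> Sigma_pts n a" and p': "Aff (-v0) z0 \<in> Sigma_pts n a"
    using v0 by (auto simp: Sigma_pts_def)
  have dl: "D_L n a (Aff v0 z0) = int 0" "D_L n a (Aff (-v0) z0) = int 0" using v0 by (simp_all add: DL_A)
  obtain C1 where C1: "\<forall>\<^sub>F t in at 0. norm (rf_eval (P0,P1,Q) (chart n a (Aff v0 z0) t)) * norm t ^ 0 \<le> C1"
    using bound_pt[OF sm n nz p pos[OF p] dl(1)] by blast
  obtain C2 where C2: "\<forall>\<^sub>F t in at 0. norm (rf_eval (P0,P1,Q) (chart n a (Aff (-v0) z0) t)) * norm t ^ 0 \<le> C2"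
    using bound_pt[OF sm n nz p' pos[OF p'] dl(2)] by blast
  define V where "V = (\<lambda>t. v0 * csqrt (hf n a (z0 + t) / v0 ^ 2))"
  have cp: "chart n a (Aff v0 z0) t = (V t, z0 + t)" for t using v0(1) by (simp add: V_def)
  have cp': "chart n a (Aff (-v0) z0) t = (- V t, z0 + t)" for t using v0(1) by (simp add: V_def)
  have e3: "\<forall>\<^sub>F t in at 0. (V t)^2 = hf n a (z0 + t)"
  proof (rule always_eventually, rule allI)
    fix t show "(V t)^2 = hf n a (z0 + t)" using v0(1) by (simp add: V_def power_mult_distrib)
  qed
  have "\<forall>\<^sub>F t in at 0. norm (poly P0 (z0 + t) / poly Q (z0 + t)) * norm t ^ 0 \<le> (C1 + C2) / 2 \<and>
           norm (poly (P1*P1*fpoly n a) (z0 + t) / poly (Q*Q) (z0 + t)) * norm t ^ (2*0) \<le> ((C1 + C2)/2)^2"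
  proof (rule RW_bound[OF _ _ e3])
    show "\<forall>\<^sub>F t in at 0. norm (rf_eval (P0,P1,Q) (V t, z0 + t)) * norm t ^ 0 \<le> C1"
      using C1 by (simp only: cp)
    show "\<forall>\<^sub>F t in at 0. norm (rf_eval (P0,P1,Q) (- V t, z0 + t)) * norm t ^ 0 \<le> C2"
      using C2 by (simp only: cp')
  qed
  then have ev: "\<forall>\<^sub>F z in at z0. norm (poly P0 z / poly Q z) * norm (z - z0) ^ 0 \<le> (C1 + C2) / 2 \<and>
           norm (poly (P1*P1*fpoly n a) z / poly (Q*Q) z) * norm (z - z0) ^ 0 \<le> ((C1 + C2)/2)^2"
    by - (rule ev_shift_to, simp)
  have r1: "P0 \<noteq> 0 \<longrightarrow> order z0 Q \<le> order z0 P0"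
  proof
    assume P0: "P0 \<noteq> 0"
    have "order z0 Q \<le> order z0 P0 + 0"
      by (rule rat_order_bound[OF P0 Q]) (rule eventually_mono[OF ev], blast)
    then show "order z0 Q \<le> order z0 P0" by simp
  qed
  have r2: "P1 \<noteq> 0 \<longrightarrow> order z0 Q \<le> order z0 P1"
  proof
    assume P1: "P1 \<noteq> 0"
    have nz1: "P1*P1*fpoly n a \<noteq> 0" using P1 by simp
    have "order z0 (Q*Q) \<le> order z0 (P1*P1*fpoly n a) + 0"
      by (rule rat_order_bound[OF nz1]) (use Q in simp, rule eventually_mono[OF ev], blast)
    moreover have "order z0 (P1*P1*fpoly n a) = 2 * order z0 P1"
      using P1 order_fpoly_nonroot[OF z0] by (simp add: order_mult)
    moreover have "order z0 (Q*Q) = 2 * order z0 Q" using Q by (rule order_sq)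
    ultimately show "order z0 Q \<le> order z0 P1" by simp
  qed
  show ?thesis using r1 r2 by blast
qed

lemma sq_helper:
  fixes x y :: complex and r :: real
  shows "(norm (x / y) * r ^ m)^2 = norm ((x * x) / (y * y)) * (r^2)^m"
proof -
  have "(r ^ m)^2 = (r^2)^m" by (simp add: power_mult[symmetric] mult.commute)
  moreover have "norm ((x * x) / (y * y)) = (norm (x / y))^2"
    by (simp add: norm_divide norm_mult power2_eq_square)
  ultimately show ?thesis by (simp add: power_mult_distrib)
qed

lemma key_ram:
  fixes P0 P1 Q :: "complex poly"
  assumes sm: "strict_mono_on {1..2*n} a" and n: "n \<ge> 1" and nz: "rf_nonzero (P0,P1,Q)"
    and pos: "\<And>p. p \<in> Sigma_pts n a \<Longrightarrow> 0 \<le> D_L n a p + ord_at n a (P0,P1,Q) p"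
    and i: "i \<in> {1..2*n}"
  shows "(P0 \<noteq> 0 \<longrightarrow> order (complex_of_real (a i)) Q \<le> order (complex_of_real (a i)) P0) \<and>
         (P1 \<noteq> 0 \<longrightarrow> order (complex_of_real (a i)) Q \<le> order (complex_of_real (a i)) P1 + order (complex_of_real (a i)) (gp n a))"
proof -
  have Q: "Q \<noteq> 0" using nz by simp
  define z0 where "z0 = complex_of_real (a i)"
  define m :: nat where "m = (if i \<le> n then 1 else 0)"
  have m1: "m \<le> 1" by (simp add: m_def)
  have p: "ram_pt a i \<in> Sigma_pts n a" using i by (auto simp: Sigma_pts_def ram_pt_def hf_zero_iff)
  have dl: "D_L n a (ram_pt a i) = int m" using DL_ram[OF sm i] by (simp add: m_def)
  obtain C1 where C1: "\<forall>\<^sub>F t in at 0. norm (rf_eval (P0,P1,Q) (chart n a (ram_pt a i) t)) * norm t ^ m \<le> C1"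
    using bound_pt[OF sm n nz p pos[OF p] dl] by blast
  define V where "V = (\<lambda>t. t * rs n a z0 t)"
  have cp: "chart n a (ram_pt a i) t = (V t, z0 + t^2)" for t
    by (simp add: ram_pt_def z0_def V_def chart_B_eq del: chart.simps)
  have cpm: "chart n a (ram_pt a i) (-t) = (- V t, z0 + t^2)" for t
    using rs_even[of n a z0 t] by (simp add: ram_pt_def z0_def V_def chart_B_eq del: chart.simps)
  have C1': "\<forall>\<^sub>F t in at 0. norm (rf_eval (P0,P1,Q) (V t, z0 + t^2)) * norm t ^ m \<le> C1"
    using C1 by (simp only: cp)
  have C2': "\<forall>\<^sub>F t in at 0. norm (rf_eval (P0,P1,Q) (- V t, z0 + t^2)) * norm t ^ m \<le> C1"
    using ev_reflect[OF C1] by (simp only: cpm norm_minus_cancel)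
  have e3: "\<forall>\<^sub>F t in at 0. (V t)^2 = hf n a (z0 + t^2)"
    using eventually_at_ball'[of 1 0 UNIV, OF zero_less_one]
  proof eventually_elim
    case (elim t)
    then have "t \<noteq> 0" by auto
    from chart_sq[OF sm p this] show ?case by (simp only: cp fst_conv snd_conv)
  qed
  define C where "C = (C1 + C1) / 2"
  have RW: "\<forall>\<^sub>F t in at 0. norm (poly P0 (z0 + t^2) / poly Q (z0 + t^2)) * norm t ^ m \<le> C \<and>
           norm (poly (P1*P1*fpoly n a) (z0 + t^2) / poly (Q*Q) (z0 + t^2)) * norm t ^ (2*m) \<le> C^2"
    unfolding C_def by (rule RW_bound[OF C1' C2' e3])
  have evA: "\<forall>\<^sub>F t in at 0. norm (poly (P0*P0) (z0 + t^2) / poly (Q*Q) (z0 + t^2)) * (norm t ^ 2) ^ m \<le> C^2"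
    using RW
  proof eventually_elim
    case (elim t)
    have a: "0 \<le> norm (poly P0 (z0+t^2) / poly Q (z0+t^2)) * norm t ^ m" by simp
    have "(norm (poly P0 (z0+t^2) / poly Q (z0+t^2)) * norm t ^ m)^2 \<le> C^2"
      using elim a by (intro power_mono) auto
    then show ?case by (simp only: sq_helper poly_mult)
  qed
  have evB: "\<forall>\<^sub>F t in at 0. norm (poly (P1*P1*fpoly n a) (z0 + t^2) / poly (Q*Q) (z0 + t^2)) * (norm t ^ 2) ^ m \<le> C^2"
    using RW
  proof eventually_elim
    case (elim t)
    have "(norm t ^ 2) ^ m = norm t ^ (2 * m)" by (simp add: power_mult)
    then show ?case using elim by simp
  qed
  have evA': "\<forall>\<^sub>F z in at z0. norm (poly (P0*P0) z / poly (Q*Q) z) * norm (z - z0) ^ m \<le> C^2"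
    using ev_square_to[where Phi = "\<lambda>z s. norm (poly (P0*P0) z / poly (Q*Q) z) * s ^ m \<le> C^2", OF evA]
    by simp
  have evB': "\<forall>\<^sub>F z in at z0. norm (poly (P1*P1*fpoly n a) z / poly (Q*Q) z) * norm (z - z0) ^ m \<le> C^2"
    using ev_square_to[where Phi = "\<lambda>z s. norm (poly (P1*P1*fpoly n a) z / poly (Q*Q) z) * s ^ m \<le> C^2", OF evB]
    by simp
  have QQ: "Q * Q \<noteq> 0" using Q by simp
  have oQ: "order z0 (Q*Q) = 2 * order z0 Q" using Q by (rule order_sq)
  have r1: "P0 \<noteq> 0 \<longrightarrow> order z0 Q \<le> order z0 P0"
  proof
    assume P0: "P0 \<noteq> 0"
    have "P0 * P0 \<noteq> 0" using P0 by simp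
    from rat_order_bound[OF this QQ evA'] have "order z0 (Q*Q) \<le> order z0 (P0*P0) + m" .
    then show "order z0 Q \<le> order z0 P0" using oQ order_sq[OF P0, of z0] m1 by simp
  qed
  have r2: "P1 \<noteq> 0 \<longrightarrow> order z0 Q \<le> order z0 P1 + order z0 (gp n a)"
  proof
    assume P1: "P1 \<noteq> 0"
    have nz1: "P1 * P1 * fpoly n a \<noteq> 0" using P1 by simp
    from rat_order_bound[OF nz1 QQ evB'] have "order z0 (Q*Q) \<le> order z0 (P1*P1*fpoly n a) + m" .
    moreover have "order z0 (P1*P1*fpoly n a) = 2 * order z0 P1 + 1"
      using P1 order_fpoly_root[OF sm i] by (simp add: order_mult z0_def)
    moreover have "order z0 (gp n a) = m" using order_gp_root[OF sm i] by (simp add: z0_def m_def)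
    ultimately show "order z0 Q \<le> order z0 P1 + order z0 (gp n a)" using oQ m1 by simp
  qed
  show ?thesis using r1 r2 unfolding z0_def by blast
qed

lemma key_inf:
  fixes P0 P1 Q :: "complex poly"
  assumes sm: "strict_mono_on {1..2*n} a" and n: "n \<ge> 1" and nz: "rf_nonzero (P0,P1,Q)"
    and pos: "\<And>p. p \<in> Sigma_pts n a \<Longrightarrow> 0 \<le> D_L n a p + ord_at n a (P0,P1,Q) p"
  shows "(P0 \<noteq> 0 \<longrightarrow> degree P0 \<le> degree Q) \<and> (P1 \<noteq> 0 \<longrightarrow> degree P1 + n \<le> degree Q)"
proof -
  have Q: "Q \<noteq> 0" using nz by simp
  have p: "Inf 1 \<in> Sigma_pts n a" and p': "Inf (-1) \<in> Sigma_pts n a" by (auto simp: Sigma_pts_def)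
  have dl: "D_L n a (Inf 1) = int 0" "D_L n a (Inf (-1)) = int 0" by (simp_all add: DL_inf)
  obtain C1 where C1: "\<forall>\<^sub>F t in at 0. norm (rf_eval (P0,P1,Q) (chart n a (Inf 1) t)) * norm t ^ 0 \<le> C1"
    using bound_pt[OF sm n nz p pos[OF p] dl(1)] by blast
  obtain C2 where C2: "\<forall>\<^sub>F t in at 0. norm (rf_eval (P0,P1,Q) (chart n a (Inf (-1)) t)) * norm t ^ 0 \<le> C2"
    using bound_pt[OF sm n nz p' pos[OF p'] dl(2)] by blast
  define V where "V = (\<lambda>t. csqrt (\<Prod>j=1..2*n. 1 - complex_of_real (a j) * t) / t ^ n)"
  have cp: "chart n a (Inf 1) t = (V t, 1/t)" for t by (simp add: V_def)
  have cp': "chart n a (Inf (-1)) t = (- V t, 1/t)" for t by (simp add: V_def)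
  have C1': "\<forall>\<^sub>F t in at 0. norm (rf_eval (P0,P1,Q) (V t, 1/t)) * norm t ^ 0 \<le> C1"
    using C1 by (simp only: cp)
  have C2': "\<forall>\<^sub>F t in at 0. norm (rf_eval (P0,P1,Q) (- V t, 1/t)) * norm t ^ 0 \<le> C2"
    using C2 by (simp only: cp')
  have e3: "\<forall>\<^sub>F t in at 0. (V t)^2 = hf n a (1/t)"
    using eventually_at_ball'[of 1 0 UNIV, OF zero_less_one]
  proof eventually_elim
    case (elim t)
    then have "t \<noteq> 0" by auto
    from chart_sq[OF sm p this] show ?case by (simp only: cp fst_conv snd_conv)
  qed
  have RW: "\<forall>\<^sub>F t in at 0. norm (poly P0 (1/t) / poly Q (1/t)) * norm t ^ 0 \<le> (C1 + C2) / 2 \<and>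
           norm (poly (P1*P1*fpoly n a) (1/t) / poly (Q*Q) (1/t)) * norm t ^ (2*0) \<le> ((C1 + C2)/2)^2"
    by (rule RW_bound[OF C1' C2' e3])
  have r1: "P0 \<noteq> 0 \<longrightarrow> degree P0 \<le> degree Q"
  proof
    assume P0: "P0 \<noteq> 0"
    show "degree P0 \<le> degree Q"
      by (rule rat_inf_bound[OF P0 Q, of "(C1 + C2) / 2"]) (rule eventually_mono[OF RW], simp)
  qed
  have r2: "P1 \<noteq> 0 \<longrightarrow> degree P1 + n \<le> degree Q"
  proof
    assume P1: "P1 \<noteq> 0"
    have nz1: "P1 * P1 * fpoly n a \<noteq> 0" using P1 by simp
    have QQ: "Q * Q \<noteq> 0" using Q by simp
    have "degree (P1*P1*fpoly n a) \<le> degree (Q*Q)"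
      by (rule rat_inf_bound[OF nz1 QQ, of "((C1 + C2) / 2)^2"]) (rule eventually_mono[OF RW], simp)
    moreover have "degree (P1*P1*fpoly n a) = 2 * degree P1 + 2 * n"
      using P1 by (simp add: degree_mult_eq degree_fpoly)
    moreover have "degree (Q*Q) = 2 * degree Q" using Q by (simp add: degree_mult_eq)
    ultimately show "degree P1 + n \<le> degree Q" by simp
  qed
  show ?thesis using r1 r2 by blast
qed

lemma const_quot:
  fixes P Q :: "complex poly"
  assumes Q: "Q \<noteq> 0" and dv: "Q dvd P" and P: "P \<noteq> 0" and dg: "degree P \<le> degree Q"
  shows "\<exists>c. c \<noteq> 0 \<and> P = smult c Q"
proof -
  obtain B where B: "P = Q * B" using dv by (elim dvdE)
  have Bnz: "B \<noteq> 0" using B P by auto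
  have "degree P = degree Q + degree B" using B Q Bnz by (simp add: degree_mult_eq)
  then have "degree B = 0" using dg by simp
  then obtain c where c: "B = [:c:]" by (metis degree_eq_zeroE)
  then have "P = smult c Q" using B by simp
  moreover have "c \<noteq> 0" using c Bnz by simp
  ultimately show ?thesis by blast
qed

lemma classify:
  fixes P0 P1 Q :: "complex poly"
  assumes sm: "strict_mono_on {1..2*n} a" and n: "n \<ge> 1" and nz: "rf_nonzero (P0,P1,Q)"
    and pos: "\<And>p. p \<in> Sigma_pts n a \<Longrightarrow> 0 \<le> D_L n a p + ord_at n a (P0,P1,Q) p"
  shows "\<exists>l m. (l \<noteq> 0 \<or> m \<noteq> 0) \<and> P0 = smult l Q \<and> gp n a * P1 = smult m Q"
proof -
  have Q: "Q \<noteq> 0" and P01: "P0 \<noteq> 0 \<or> P1 \<noteq> 0" using nz by auto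
  have ki: "(P0 \<noteq> 0 \<longrightarrow> degree P0 \<le> degree Q) \<and> (P1 \<noteq> 0 \<longrightarrow> degree P1 + n \<le> degree Q)"
    by (rule key_inf[OF sm n nz pos])
  have ords: "(P0 \<noteq> 0 \<longrightarrow> order z Q \<le> order z P0) \<and> (P1 \<noteq> 0 \<longrightarrow> order z Q \<le> order z P1 + order z (gp n a))" for z
  proof (cases "hf n a z = 0")
    case True
    then obtain i where i: "i \<in> {1..2*n}" "z = complex_of_real (a i)" using hf_zero_iff by blast
    show ?thesis using key_ram[OF sm n nz pos i(1)] i(2) by simp
  next
    case False
    show ?thesis using key_gen[OF sm n nz pos False] by auto
  qed
  obtain l where l: "P0 = smult l Q" "P0 \<noteq> 0 \<longrightarrow> l \<noteq> 0"
  proof (cases "P0 = 0")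
    case True then show ?thesis using that[of 0] by simp
  next
    case False
    have "Q dvd P0" using ords False by (intro dvd_by_orders[OF Q]) blast
    then obtain c where "c \<noteq> 0" "P0 = smult c Q" using const_quot[OF Q _ False] ki False by blast
    then show ?thesis using that[of c] by blast
  qed
  obtain m where m: "gp n a * P1 = smult m Q" "P1 \<noteq> 0 \<longrightarrow> m \<noteq> 0"
  proof (cases "P1 = 0")
    case True then show ?thesis using that[of 0] by simp
  next
    case False
    have gP: "gp n a * P1 \<noteq> 0" using False by simp
    have "Q dvd gp n a * P1"
    proof (rule dvd_by_orders[OF Q], rule allI)
      fix z show "order z Q \<le> order z (gp n a * P1)"
        using ords[of z] False gP by (simp add: order_mult)
    qed
    moreover have "degree (gp n a * P1) \<le> degree Q"
      using ki False by (simp add: degree_mult_eq degree_gp)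
    ultimately obtain c where "c \<noteq> 0" "gp n a * P1 = smult c Q" using const_quot[OF Q _ gP] by blast
    then show ?thesis using that[of c] by blast
  qed
  show ?thesis using l m P01 by blast
qed

lemma phi_eq:
  assumes l: "P0 = smult l Q" and m: "gp n a * P1 = smult m Q"
    and q: "poly Q z \<noteq> 0" and g: "poly (gp n a) z \<noteq> 0"
  shows "rf_eval (P0,P1,Q) (v,z) = l + m * v / poly (gp n a) z"
proof -
  have p0: "poly P0 z = l * poly Q z" using l by simp
  have "poly (gp n a) z * poly P1 z = m * poly Q z" using arg_cong[OF m, of "\<lambda>p. poly p z"] by simp
  then have p1: "poly P1 z = m * poly Q z / poly (gp n a) z" using g by (simp add: field_simps)
  show ?thesis using q g by (simp add: p0 p1 field_simps)
qed

definition Psi :: "nat \<Rightarrow> (nat \<Rightarrow> real) \<Rightarrow> complex \<Rightarrow> complex \<Rightarrow> spt \<Rightarrow> complex \<Rightarrow> complex" where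
  "Psi n a l m p t = l + m * fst (chart n a p t) / poly (gp n a) (snd (chart n a p t))"

lemma D_formula:
  assumes l: "P0 = smult l Q" and m: "gp n a * P1 = smult m Q" and Q: "Q \<noteq> 0"
    and p: "p \<in> Sigma_pts n a"
  shows "ord_at n a (P0,P1,Q) p = zorder (Psi n a l m p) 0"
proof -
  have R: "Q * gp n a \<noteq> 0" using Q by simp
  have "eventually (\<lambda>t. rf_eval (P0,P1,Q) (chart n a p t) = Psi n a l m p t) (at 0)"
    using ev_poly_chart_nz[OF p R]
  proof eventually_elim
    case (elim t)
    then have "poly Q (snd (chart n a p t)) \<noteq> 0" "poly (gp n a) (snd (chart n a p t)) \<noteq> 0" by auto
    from phi_eq[OF l m this, of "fst (chart n a p t)"] show ?case
      by (simp add: Psi_def)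
  qed
  then show ?thesis unfolding ord_at_def by (rule zorder_cong_ev)
qed

lemma Psi_freq:
  assumes sm: "strict_mono_on {1..2*n} a" and n: "n \<ge> 1" and nz: "rf_nonzero (P0,P1,Q)"
    and l: "P0 = smult l Q" and m: "gp n a * P1 = smult m Q"
    and p: "p \<in> Sigma_pts n a"
  shows "frequently (\<lambda>t. Psi n a l m p t \<noteq> 0) (at 0)"
proof -
  have Q: "Q \<noteq> 0" using nz by simp
  have R: "Q * gp n a \<noteq> 0" using Q by simp
  have ev: "eventually (\<lambda>t. rf_eval (P0,P1,Q) (chart n a p t) = Psi n a l m p t) (at 0)"
    using ev_poly_chart_nz[OF p R]
  proof eventually_elim
    case (elim t)
    then have "poly Q (snd (chart n a p t)) \<noteq> 0" "poly (gp n a) (snd (chart n a p t)) \<noteq> 0" by auto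
    from phi_eq[OF l m this, of "fst (chart n a p t)"] show ?case
      by (simp add: Psi_def)
  qed
  have "frequently (\<lambda>t. rf_eval (P0,P1,Q) (chart n a p t) \<noteq> 0 \<and> rf_eval (P0,P1,Q) (chart n a p t) = Psi n a l m p t) (at 0)"
    by (rule frequently_eventually_frequently[OF F_freq[OF sm n p nz] ev])
  then show ?thesis by (rule frequently_elim1) auto
qed

lemma Psi_A: "v \<noteq> 0 \<Longrightarrow> Psi n a l m (Aff v z) t = l + m * (v * csqrt (hf n a (z + t) / v ^ 2)) / poly (gp n a) (z + t)"
  by (simp add: Psi_def)

lemma Psi_ram: "Psi n a l m (ram_pt a i) t =
   l + m * (t * rs n a (complex_of_real (a i)) t) / poly (gp n a) (complex_of_real (a i) + t^2)"
  by (simp add: Psi_def ram_pt_def chartB_fst chartB_snd del: chart.simps)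

lemma Psi_A_analytic:
  assumes v: "v \<noteq> 0" "v^2 = hf n a z" and g: "poly (gp n a) z \<noteq> 0"
  shows "Psi n a l m (Aff v z) analytic_on {0}" and "Psi n a l m (Aff v z) 0 = l + m * v / poly (gp n a) z"
proof -
  have a1: "(\<lambda>t. v * csqrt (hf n a (z + t) / v ^ 2)) analytic_on {0}" by (rule chartA_analytic[OF v])
  have a2: "(\<lambda>t. poly (gp n a) (z + t)) analytic_on {0}" by (intro analytic_poly_comp analytic_intros)
  have "(\<lambda>t. l + m * (v * csqrt (hf n a (z + t) / v ^ 2)) / poly (gp n a) (z + t)) analytic_on {0}"
    by (rule analytic_on_add[OF analytic_on_const analytic_on_divide[OF analytic_on_mult[OF analytic_on_const a1] a2]])
       (use g in simp)
  then show "Psi n a l m (Aff v z) analytic_on {0}" using Psi_A[OF v(1)] by presburger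
  show "Psi n a l m (Aff v z) 0 = l + m * v / poly (gp n a) z"
    using Psi_A[OF v(1)] chartA0[OF v] by simp
qed

lemma reg_zorder:
  assumes sm: "strict_mono_on {1..2*n} a" and n: "n \<ge> 1" and nz: "rf_nonzero (P0,P1,Q)"
    and l: "P0 = smult l Q" and m: "gp n a * P1 = smult m Q"
    and v: "v \<noteq> 0" "v^2 = hf n a z" and g: "poly (gp n a) z \<noteq> 0"
  shows "zorder (Psi n a l m (Aff v z)) 0 = 0 \<longleftrightarrow> l + m * v / poly (gp n a) z \<noteq> 0"
proof -
  have p: "Aff v z \<in> Sigma_pts n a" using v by (simp add: Sigma_pts_def)
  show ?thesis
    using zorder_eq_0_iff[OF Psi_A_analytic(1)[OF v g] Psi_freq[OF sm n nz l m p]] Psi_A_analytic(2)[OF v g]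
    by simp
qed

lemma gp_at_ram:
  assumes sm: "strict_mono_on {1..2*n} a" and i: "i \<in> {1..2*n}"
  shows "poly (gp n a) (complex_of_real (a i)) = 0 \<longleftrightarrow> i \<le> n"
proof -
  have "poly (gp n a) (complex_of_real (a i)) = (\<Prod>j\<in>{1..n}. complex_of_real (a i) - complex_of_real (a j))"
    by (simp add: gp_def poly_gpoly)
  also have "\<dots> = 0 \<longleftrightarrow> (\<exists>j\<in>{1..n}. a i = a j)" by simp
  also have "\<dots> \<longleftrightarrow> i \<le> n"
  proof
    assume "\<exists>j\<in>{1..n}. a i = a j"
    then obtain j where "j \<in> {1..n}" "a i = a j" by blast
    then show "i \<le> n" using a_inj[OF sm i, of j] by auto
  next
    assume "i \<le> n" then show "\<exists>j\<in>{1..n}. a i = a j" using i by auto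
  qed
  finally show ?thesis .
qed

lemma ram_np1_zorder:
  assumes sm: "strict_mono_on {1..2*n} a" and n: "n \<ge> 1"
  shows "l \<noteq> 0 \<Longrightarrow> zorder (Psi n a l m (ram_pt a (n+1))) 0 = 0"
    and "l = 0 \<Longrightarrow> m \<noteq> 0 \<Longrightarrow> zorder (Psi n a l m (ram_pt a (n+1))) 0 = 1"
proof -
  define z0 where "z0 = complex_of_real (a (n+1))"
  have i: "n + 1 \<in> {1..2*n}" using n by simp
  have g0: "poly (gp n a) z0 \<noteq> 0" using gp_at_ram[OF sm i] by (simp add: z0_def)
  have ag: "(\<lambda>t. poly (gp n a) (z0 + t^2)) analytic_on {0}" by (intro analytic_poly_comp analytic_intros)
  have h: "(\<lambda>t. m * rs n a z0 t / poly (gp n a) (z0 + t^2)) analytic_on {0}"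
    by (rule analytic_on_divide[OF analytic_on_mult[OF analytic_on_const rs_analytic] ag]) (use g0 in simp)
  have eq: "Psi n a l m (ram_pt a (n+1)) t = l + (m * rs n a z0 t / poly (gp n a) (z0 + t^2)) * t" for t
    unfolding Psi_ram z0_def[symmetric] by (simp add: field_simps)
  show "zorder (Psi n a l m (ram_pt a (n+1))) 0 = 0" if "l \<noteq> 0"
  proof -
    have an: "(\<lambda>t. l + (m * rs n a z0 t / poly (gp n a) (z0 + t^2)) * t) analytic_on {0}"
      by (rule analytic_on_add[OF analytic_on_const analytic_on_mult[OF h analytic_on_ident]])
    have "zorder (\<lambda>t. l + (m * rs n a z0 t / poly (gp n a) (z0 + t^2)) * t) 0 = 0"
      by (rule zorder_eq_0I[OF an]) (use that in simp)
    then show ?thesis unfolding eq .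
  qed
  show "zorder (Psi n a l m (ram_pt a (n+1))) 0 = 1" if "l = 0" "m \<noteq> 0"
  proof (rule zorder_eqI_ev[OF h])
    show "m * rs n a z0 0 / poly (gp n a) (z0 + 0^2) \<noteq> 0" using that rs0 g0 by simp
    show "\<forall>\<^sub>F w in at 0. Psi n a l m (ram_pt a (n + 1)) w = m * rs n a z0 w / poly (gp n a) (z0 + w\<^sup>2) * (w - 0) powi 1"
    proof (rule always_eventually, rule allI)
      fix w show "Psi n a l m (ram_pt a (n + 1)) w = m * rs n a z0 w / poly (gp n a) (z0 + w\<^sup>2) * (w - 0) powi 1"
        using eq[of w] that by simp
    qed
  qed
qed

lemma ram_n_zorder:
  assumes sm: "strict_mono_on {1..2*n} a" and n: "n \<ge> 1" and m: "m \<noteq> 0"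
  shows "zorder (Psi n a l m (ram_pt a n)) 0 = -1"
proof -
  define z0 where "z0 = complex_of_real (a n)"
  define g1 where "g1 = gpoly a ({1..n} - {n})"
  have i: "n \<in> {1..2*n}" using n by simp
  have gsplit: "gp n a = lf z0 * g1"
    unfolding gp_def g1_def z0_def by (rule gpoly_split) (use n in auto)
  have g10: "poly g1 z0 \<noteq> 0"
  proof -
    have "poly g1 z0 = (\<Prod>j\<in>{1..n} - {n}. z0 - complex_of_real (a j))" by (simp add: g1_def poly_gpoly)
    moreover have "z0 - complex_of_real (a j) \<noteq> 0" if "j \<in> {1..n} - {n}" for j
      using a_inj[OF sm i, of j] that by (auto simp: z0_def)
    ultimately show ?thesis by simp
  qed
  have g1nz: "g1 \<noteq> 0" using g10 by auto
  have ag: "(\<lambda>t. poly g1 (z0 + t^2)) analytic_on {0}" by (intro analytic_poly_comp analytic_intros)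
  define h where "h = (\<lambda>t. (l * t * poly g1 (z0 + t^2) + m * rs n a z0 t) / poly g1 (z0 + t^2))"
  have han: "h analytic_on {0}" unfolding h_def
    by (rule analytic_on_divide[OF analytic_on_add[OF analytic_on_mult[OF analytic_on_mult[OF analytic_on_const analytic_on_ident] ag]
          analytic_on_mult[OF analytic_on_const rs_analytic]] ag]) (use g10 in simp)
  have h0: "h 0 \<noteq> 0" using m rs0 g10 by (simp add: h_def)
  have p: "ram_pt a n \<in> Sigma_pts n a" using i by (auto simp: Sigma_pts_def ram_pt_def hf_zero_iff)
  have evg: "\<forall>\<^sub>F t in at 0. poly g1 (z0 + t^2) \<noteq> 0"
    using ev_poly_chart_nz[OF p g1nz] by (simp add: ram_pt_def z0_def chartB_snd del: chart.simps)
  show ?thesis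
  proof (rule zorder_eqI_ev[OF han h0])
    show "\<forall>\<^sub>F w in at 0. Psi n a l m (ram_pt a n) w = h w * (w - 0) powi (-1)"
      using evg eventually_at_ball'[of 1 0 UNIV, OF zero_less_one]
    proof eventually_elim
      case (elim t)
      then have t0: "t \<noteq> 0" by auto
      have "poly (gp n a) (z0 + t^2) = t^2 * poly g1 (z0 + t^2)" by (simp add: gsplit lf_def algebra_simps)
      then have "Psi n a l m (ram_pt a n) t = l + m * (t * rs n a z0 t) / (t^2 * poly g1 (z0 + t^2))"
        unfolding Psi_ram z0_def[symmetric] by simp
      also have "\<dots> = h t * t powi (-1)"
        using t0 elim(1) by (simp add: h_def power_int_minus field_simps power2_eq_square)
      finally show ?case by simp
    qed
  qed
qed

definition hq :: "nat \<Rightarrow> (nat \<Rightarrow> real) \<Rightarrow> complex poly" where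
  "hq n a = (\<Prod>i\<in>{n+1..2*n}. [: complex_of_real (a i), -1 :])"

lemma poly_hq: "poly (hq n a) z = (\<Prod>i\<in>{n+1..2*n}. complex_of_real (a i) - z)"
  by (simp add: hq_def poly_prod)

lemma poly_hp_hq: "poly (hp n a) z = (-1)^n * poly (hq n a) z"
proof -
  have "poly (hp n a) z = (\<Prod>i\<in>{n+1..2*n}. - (complex_of_real (a i) - z))"
    by (simp add: hp_def poly_gpoly)
  also have "\<dots> = (-1) ^ card {n+1..2*n} * (\<Prod>i\<in>{n+1..2*n}. complex_of_real (a i) - z)"
    by (rule prod_uminus)
  finally show ?thesis by (simp add: poly_hq)
qed

lemma poly_gp_real: "poly (gp n a) (complex_of_real x) = complex_of_real (\<Prod>i\<in>{1..n}. x - a i)"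
  by (simp add: gp_def poly_gpoly)

lemma poly_hq_real: "poly (hq n a) (complex_of_real x) = complex_of_real (\<Prod>i\<in>{n+1..2*n}. a i - x)"
  by (simp add: poly_hq)

definition rho :: "nat \<Rightarrow> (nat \<Rightarrow> real) \<Rightarrow> real \<Rightarrow> real \<Rightarrow> real" where
  "rho n a c x = c * (\<Prod>i\<in>{1..n}. x - a i) - (\<Prod>i\<in>{n+1..2*n}. a i - x)"

definition Pc :: "nat \<Rightarrow> (nat \<Rightarrow> real) \<Rightarrow> real \<Rightarrow> complex poly" where
  "Pc n a c = smult (complex_of_real c) (gp n a) - hq n a"

lemma poly_Pc_real: "poly (Pc n a c) (complex_of_real x) = complex_of_real (rho n a c x)"
  by (simp add: Pc_def rho_def poly_gp_real poly_hq_real)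

lemma a_le:
  assumes sm: "strict_mono_on {1..2*n} (a::nat\<Rightarrow>real)" and "i \<in> {1..2*n}" "j \<in> {1..2*n}" "i \<le> j"
  shows "a i \<le> a j"
  using assms a_less[OF sm, of i j] by (cases "i = j") auto

lemma rho_mono:
  assumes sm: "strict_mono_on {1..2*n} a" and n: "n \<ge> 1" and c: "c > 0"
    and x: "a n \<le> x" "x < y" "y \<le> a (n+1)"
  shows "rho n a c x < rho n a c y"
proof -
  have "(\<Prod>i\<in>{1..n}. x - a i) \<le> (\<Prod>i\<in>{1..n}. y - a i)"
  proof (rule prod_mono)
    fix i assume i: "i \<in> {1..n}"
    have "a i \<le> a n" using a_le[OF sm, of i n] i by auto
    then show "0 \<le> x - a i \<and> x - a i \<le> y - a i" using x by auto
  qed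
  moreover have "(\<Prod>i\<in>{n+1..2*n}. a i - y) < (\<Prod>i\<in>{n+1..2*n}. a i - x)"
  proof (rule prod_mono_strict[of "n+1"])
    show "n + 1 \<in> {n+1..2*n}" using n by simp
    show "a (n+1) - y < a (n+1) - x" using x by simp
    show "finite {n+1..2*n}" by simp
    fix i assume i: "i \<in> {n+1..2*n}"
    have "a (n+1) \<le> a i" using a_le[OF sm, of "n+1" i] i by auto
    then show "0 \<le> a i - y \<and> a i - y \<le> a i - x" using x by auto
    show "0 < a i - x" using \<open>a (n+1) \<le> a i\<close> x by auto
  qed
  ultimately show ?thesis unfolding rho_def using c
    by (smt (verit, best) mult_left_mono)
qed

lemma rho_ends:
  assumes sm: "strict_mono_on {1..2*n} a" and n: "n \<ge> 1" and c: "c > 0"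
  shows "rho n a c (a n) < 0" and "rho n a c (a (n+1)) > 0"
proof -
  have z1: "(\<Prod>i\<in>{1..n}. a n - a i) = 0"
    by (rule prod_zero) (use n in auto)
  have p1: "(\<Prod>i\<in>{n+1..2*n}. a i - a n) > 0"
  proof (rule prod_pos)
    fix i assume "i \<in> {n+1..2*n}"
    then show "0 < a i - a n" using a_less[OF sm, of n i] n by auto
  qed
  show "rho n a c (a n) < 0" unfolding rho_def z1 using p1 by simp
  have z2: "(\<Prod>i\<in>{n+1..2*n}. a i - a (n+1)) = 0"
    by (rule prod_zero) (use n in auto)
  have p2: "(\<Prod>i\<in>{1..n}. a (n+1) - a i) > 0"
  proof (rule prod_pos)
    fix i assume "i \<in> {1..n}"
    then show "0 < a (n+1) - a i" using a_less[OF sm, of i "n+1"] n by auto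
  qed
  show "rho n a c (a (n+1)) > 0" unfolding rho_def z2 using p2 c by simp
qed

lemma rho_root:
  assumes sm: "strict_mono_on {1..2*n} a" and n: "n \<ge> 1" and c: "c > 0"
  shows "\<exists>x0. a n < x0 \<and> x0 < a (n+1) \<and> rho n a c x0 = 0 \<and>
     (\<forall>x. a n \<le> x \<and> x \<le> a (n+1) \<and> rho n a c x = 0 \<longrightarrow> x = x0)"
proof -
  have le: "a n \<le> a (n+1)" using a_less[OF sm, of n "n+1"] n by auto
  have cont: "continuous_on {a n..a (n+1)} (rho n a c)"
    unfolding rho_def by (intro continuous_intros)
  obtain x0 where x0: "a n \<le> x0" "x0 \<le> a (n+1)" "rho n a c x0 = 0"
    using IVT'[of "rho n a c" "a n" 0 "a (n+1)", OF _ _ le cont] rho_ends[OF sm n c] by force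
  have "x0 \<noteq> a n" "x0 \<noteq> a (n+1)" using x0(3) rho_ends[OF sm n c] by auto
  then have x0': "a n < x0" "x0 < a (n+1)" using x0 by auto
  have uniq: "x = x0" if "a n \<le> x" "x \<le> a (n+1)" "rho n a c x = 0" for x
  proof (rule ccontr)
    assume "x \<noteq> x0"
    then consider "x < x0" | "x0 < x" by linarith
    then show False
    proof cases
      case 1 then show False using rho_mono[OF sm n c, of x x0] that x0 by simp
    next
      case 2 then show False using rho_mono[OF sm n c, of x0 x] that x0 by simp
    qed
  qed
  show ?thesis using x0' x0(3) uniq by blast
qed

lemma pderiv_lf: "pderiv (lf c) = 1"
  by (simp add: lf_def pderiv_pCons)

lemma pderiv_gp_real:
  "poly (pderiv (gp n a)) (complex_of_real x) = complex_of_real (\<Sum>j\<in>{1..n}. \<Prod>i\<in>{1..n} - {j}. x - a i)"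
  by (simp add: gp_def gpoly_def pderiv_prod pderiv_lf poly_sum poly_prod)

lemma pderiv_hq_real:
  "poly (pderiv (hq n a)) (complex_of_real x) = - complex_of_real (\<Sum>j\<in>{n+1..2*n}. \<Prod>i\<in>{n+1..2*n} - {j}. a i - x)"
  by (simp add: hq_def pderiv_prod pderiv_pCons poly_sum poly_prod sum_negf)

lemma order_Pc_root:
  assumes sm: "strict_mono_on {1..2*n} a" and n: "n \<ge> 1" and c: "c > 0"
    and x: "a n < x" "x < a (n+1)" and r: "rho n a c x = 0"
  shows "order (complex_of_real x) (Pc n a c) = 1"
proof -
  define A where "A = (\<Sum>j\<in>{1..n}. \<Prod>i\<in>{1..n} - {j}. x - a i)"
  define B where "B = (\<Sum>j\<in>{n+1..2*n}. \<Prod>i\<in>{n+1..2*n} - {j}. a i - x)"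
  have A: "A > 0" unfolding A_def
  proof (rule sum_pos)
    show "finite {1..n}" "{1..n} \<noteq> {}" using n by auto
    fix j assume "j \<in> {1..n}"
    show "0 < (\<Prod>i\<in>{1..n} - {j}. x - a i)"
    proof (rule prod_pos)
      fix i assume "i \<in> {1..n} - {j}"
      then have "a i \<le> a n" using a_le[OF sm, of i n] by auto
      then show "0 < x - a i" using x by auto
    qed
  qed
  have B: "B > 0" unfolding B_def
  proof (rule sum_pos)
    show "finite {n+1..2*n}" "{n+1..2*n} \<noteq> {}" using n by auto
    fix j assume "j \<in> {n+1..2*n}"
    show "0 < (\<Prod>i\<in>{n+1..2*n} - {j}. a i - x)"
    proof (rule prod_pos)
      fix i assume "i \<in> {n+1..2*n} - {j}"
      then have "a (n+1) \<le> a i" using a_le[OF sm, of "n+1" i] by auto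
      then show "0 < a i - x" using x by auto
    qed
  qed
  have e: "poly (pderiv (Pc n a c)) (complex_of_real x) = complex_of_real (c * A + B)"
    by (simp add: Pc_def pderiv_diff pderiv_smult pderiv_gp_real pderiv_hq_real A_def B_def)
  have pos: "c * A + B > 0" using A B c by (simp add: add_pos_pos)
  have d: "poly (pderiv (Pc n a c)) (complex_of_real x) \<noteq> 0"
    unfolding e of_real_eq_0_iff using pos by linarith
  then have "pderiv (Pc n a c) \<noteq> 0" by auto
  then have "Pc n a c \<noteq> 0" by auto
  moreover have "poly (Pc n a c) (complex_of_real x) = 0" using r by (simp add: poly_Pc_real)
  ultimately have "order (complex_of_real x) (Pc n a c) = Suc (order (complex_of_real x) (pderiv (Pc n a c)))"
    by (rule order_pderiv)
  moreover have "order (complex_of_real x) (pderiv (Pc n a c)) = 0" using d by (simp add: order_0I)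
  ultimately show ?thesis by simp
qed

lemma hq_a12:
  assumes sm: "strict_mono_on {1..2*n} a" and n: "n \<ge> 2"
  shows "poly (hq n a) (complex_of_real (a 1)) \<noteq> poly (hq n a) (complex_of_real (a 2))"
proof -
  have "(\<Prod>i\<in>{n+1..2*n}. a i - a 2) < (\<Prod>i\<in>{n+1..2*n}. a i - a 1)"
  proof (rule prod_mono_strict[of "n+1"])
    show "n + 1 \<in> {n+1..2*n}" using n by simp
    show "a (n+1) - a 2 < a (n+1) - a 1" using a_less[OF sm, of 1 2] n by simp
    show "finite {n+1..2*n}" by simp
    fix i assume i: "i \<in> {n+1..2*n}"
    have "a 2 < a i" using a_less[OF sm, of 2 i] i n by auto
    moreover have "a 1 < a 2" using a_less[OF sm, of 1 2] n by simp
    ultimately show "0 \<le> a i - a 2 \<and> a i - a 2 \<le> a i - a 1" "0 < a i - a 1" by auto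
  qed
  then show ?thesis by (simp add: poly_hq_real del: of_real_prod)
qed

lemma cnj_hf: "cnj (hf n a z) = hf n a (cnj z)"
  by (simp add: hf_def)

lemma cnj_gp: "cnj (poly (gp n a) z) = poly (gp n a) (cnj z)"
  by (simp add: gp_def poly_gpoly)

lemma ev_nz_analytic:
  assumes "f analytic_on {0}" "f 0 \<noteq> 0"
  shows "eventually (\<lambda>t. f t \<noteq> 0) (at (0::complex))"
proof -
  have "isCont f 0" by (rule analytic_at_imp_isCont[OF assms(1)])
  then have "(f \<longlongrightarrow> f 0) (at 0)" by (simp add: isCont_def)
  then show ?thesis using assms(2) by (rule tendsto_imp_eventually_ne)
qed

lemma interior_zorder:
  assumes v0: "v0 \<noteq> 0" "v0^2 = hf n a z0" and g: "poly (gp n a) z0 \<noteq> 0" and l: "l \<noteq> 0"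
    and zero: "l + m * v0 / poly (gp n a) z0 = 0"
    and R: "\<And>z. l^2 * poly (gp n a) z - m^2 * poly (hp n a) z = poly R z"
    and R2: "R = lf z0 * R2" "poly R2 z0 \<noteq> 0"
  shows "zorder (Psi n a l m (Aff v0 z0)) 0 = 1"
proof -
  define W where "W = (\<lambda>t. v0 * csqrt (hf n a (z0 + t) / v0 ^ 2))"
  define G where "G = (\<lambda>t. poly (gp n a) (z0 + t))"
  define Ps where "Ps = (\<lambda>t. l - m * W t / G t)"
  have Wan: "W analytic_on {0}" unfolding W_def by (rule chartA_analytic[OF v0])
  have W0: "W 0 = v0" unfolding W_def by (rule chartA0[OF v0])
  have W2: "(W t)^2 = hf n a (z0 + t)" for t using v0(1) by (simp add: W_def power_mult_distrib)
  have Gan: "G analytic_on {0}" unfolding G_def by (intro analytic_poly_comp analytic_intros)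
  have G0: "G 0 \<noteq> 0" using g by (simp add: G_def)
  have Psan: "Ps analytic_on {0}" unfolding Ps_def
    by (rule analytic_on_diff[OF analytic_on_const analytic_on_divide[OF analytic_on_mult[OF analytic_on_const Wan] Gan]])
       (use G0 in simp)
  have Ps0: "Ps 0 = 2 * l"
  proof -
    have "m * v0 / poly (gp n a) z0 = - l" using zero by (simp add: add_eq_0_iff)
    then show ?thesis by (simp add: Ps_def W0 G_def)
  qed
  have Ps0nz: "Ps 0 \<noteq> 0" using l Ps0 by simp
  have GPan: "(\<lambda>t. G t * Ps t) analytic_on {0}" by (rule analytic_on_mult[OF Gan Psan])
  define h where "h = (\<lambda>t. poly R2 (z0 + t) / (G t * Ps t))"
  have han: "h analytic_on {0}" unfolding h_def
    by (rule analytic_on_divide[OF analytic_poly_comp GPan]) (auto intro: analytic_intros simp: G0 Ps0nz)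
  have h0: "h 0 \<noteq> 0" using R2(2) G0 Ps0nz by (simp add: h_def)
  have evnz: "eventually (\<lambda>t. G t * Ps t \<noteq> 0) (at 0)"
    by (rule ev_nz_analytic[OF GPan]) (use G0 Ps0nz in simp)
  have PsiA: "Psi n a l m (Aff v0 z0) t = l + m * W t / G t" for t
    using Psi_A[OF v0(1)] by (simp add: W_def G_def)
  show ?thesis
  proof (rule zorder_eqI_ev[OF han h0])
    show "\<forall>\<^sub>F w in at 0. Psi n a l m (Aff v0 z0) w = h w * (w - 0) powi 1"
      using evnz
    proof eventually_elim
      case (elim t)
      then have Gt: "G t \<noteq> 0" and Pst: "Ps t \<noteq> 0" by auto
      have hfs: "hf n a (z0 + t) = G t * poly (hp n a) (z0 + t)" by (simp add: G_def hf_split)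
      have "(l + m * W t / G t) * Ps t = l^2 - m^2 * (W t)^2 / (G t)^2"
        unfolding Ps_def using Gt by (simp add: field_simps power2_eq_square)
      also have "\<dots> = (l^2 * G t - m^2 * poly (hp n a) (z0 + t)) / G t"
        unfolding W2 hfs using Gt by (simp add: field_simps power2_eq_square)
      also have "\<dots> = poly R (z0 + t) / G t"
        using R[of "z0 + t"] by (simp add: G_def)
      also have "\<dots> = t * poly R2 (z0 + t) / G t"
        by (simp add: R2(1) lf_def algebra_simps)
      finally have "(l + m * W t / G t) * Ps t = t * poly R2 (z0 + t) / G t" .
      then have "l + m * W t / G t = t * poly R2 (z0 + t) / (G t * Ps t)"
        using Pst Gt by (simp add: field_simps)
      then show ?case by (simp add: PsiA h_def)
    qed
  qed
qed

lemma interior_nz: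
  assumes sm: "strict_mono_on {1..2*n} a" and n: "n \<ge> 1" and x: "a n < x" "x < a (n+1)"
  shows "hf n a (complex_of_real x) \<noteq> 0" and "poly (gp n a) (complex_of_real x) \<noteq> 0"
proof -
  show "hf n a (complex_of_real x) \<noteq> 0"
  proof
    assume "hf n a (complex_of_real x) = 0"
    then obtain i where i: "i \<in> {1..2*n}" "x = a i" using hf_zero_iff by auto
    show False
    proof (cases "i \<le> n")
      case True then show False using a_le[OF sm, of i n] i x n by auto
    next
      case False then show False using a_le[OF sm, of "n+1" i] i x n by auto
    qed
  qed
  have "(\<Prod>i\<in>{1..n}. x - a i) > 0"
  proof (rule prod_pos)
    fix i assume "i \<in> {1..n}"
    then show "0 < x - a i" using a_le[OF sm, of i n] x by auto
  qed
  then show "poly (gp n a) (complex_of_real x) \<noteq> 0" unfolding poly_gp_real of_real_eq_0_iff by linarith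
qed

lemma circle_cases:
  assumes sm: "strict_mono_on {1..2*n} a" and n: "n \<ge> 1" and q: "q \<in> central_circle n a"
  shows "q = ram_pt a n \<or> q = ram_pt a (n+1) \<or>
    (\<exists>v x. q = Aff v (complex_of_real x) \<and> a n < x \<and> x < a (n+1) \<and> v^2 = hf n a (complex_of_real x))"
proof -
  obtain v z where q1: "q = Aff v z" "z \<in> \<real>" "a n \<le> Re z" "Re z \<le> a (n+1)" and qs: "q \<in> Sigma_pts n a"
    using q unfolding central_circle_def by blast
  have vz: "v^2 = hf n a z" using qs q1(1) by (auto simp: Sigma_pts_def)
  define x where "x = Re z"
  have zx: "z = complex_of_real x" using q1(2) by (simp add: x_def Reals_def)
  consider "x = a n" | "x = a (n+1)" | "a n < x \<and> x < a (n+1)" using q1 x_def by fastforce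
  then show ?thesis
  proof cases
    case 1
    have "hf n a z = 0" using hf_zero_iff[of n a z] zx 1 n by auto
    then have "v = 0" using vz by simp
    then show ?thesis using q1(1) zx 1 by (simp add: ram_pt_def)
  next
    case 2
    have "hf n a z = 0" using hf_zero_iff[of n a z] zx 2 n by (metis atLeastAtMost_iff le_add2 mult_2 add_le_mono1 nat_add_left_cancel_le)
    then have "v = 0" using vz by simp
    then show ?thesis using q1(1) zx 2 by (simp add: ram_pt_def)
  next
    case 3
    then show ?thesis using q1(1) zx vz by blast
  qed
qed

lemma ram_in_circle:
  assumes sm: "strict_mono_on {1..2*n} a" and n: "n \<ge> 1"
  shows "ram_pt a n \<in> central_circle n a" and "ram_pt a (n+1) \<in> central_circle n a"
proof -
  have le: "a n \<le> a (n+1)" using a_less[OF sm, of n "n+1"] n by auto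
  have "hf n a (complex_of_real (a n)) = 0" using hf_zero_iff[of n a] n by auto
  then show "ram_pt a n \<in> central_circle n a" using le
    by (auto simp: central_circle_def ram_pt_def Sigma_pts_def)
  have "hf n a (complex_of_real (a (n+1))) = 0" using hf_zero_iff[of n a] n by fastforce
  then show "ram_pt a (n+1) \<in> central_circle n a" using le
    by (auto simp: central_circle_def ram_pt_def Sigma_pts_def)
qed

lemma main_m0:
  assumes sm: "strict_mono_on {1..2*n} a" and n: "n \<ge> 1" and l: "l \<noteq> 0"
    and DS: "\<And>p. p \<in> Sigma_pts n a \<Longrightarrow> D p = D_L n a p + zorder (Psi n a l 0 p) 0"
  shows "\<exists>q \<in> central_circle n a. D q = 1 \<and> (\<forall>q' \<in> central_circle n a. D q' \<noteq> 0 \<longrightarrow> q' = q)"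
proof -
  have Pc: "Psi n a l 0 p = (\<lambda>t. l)" for p by (simp add: Psi_def fun_eq_iff)
  have DD: "D p = D_L n a p" if "p \<in> Sigma_pts n a" for p using DS[OF that] l by (simp add: Pc)
  have i: "n \<in> {1..2*n}" using n by simp
  have qc: "ram_pt a n \<in> central_circle n a" by (rule ram_in_circle(1)[OF sm n])
  then have qs: "ram_pt a n \<in> Sigma_pts n a" by (simp add: central_circle_def)
  have "D (ram_pt a n) = 1" using DD[OF qs] DL_ram[OF sm i] by simp
  moreover have "q' = ram_pt a n" if q': "q' \<in> central_circle n a" "D q' \<noteq> 0" for q'
  proof -
    have q's: "q' \<in> Sigma_pts n a" using q' by (simp add: central_circle_def)
    have "D_L n a q' \<noteq> 0" using DD[OF q's] q'(2) by simp
    then obtain j where j: "j \<in> {1..n}" "q' = ram_pt a j" by (auto simp: D_L_def split: if_splits)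
    have "a n \<le> a j" using q'(1) j(2) by (auto simp: central_circle_def ram_pt_def)
    moreover have "j \<le> n" using j by simp
    ultimately have "j = n"
      using a_less[OF sm, of j n] j(1) n by (cases "j = n") auto
    then show ?thesis using j by simp
  qed
  ultimately show ?thesis using qc by blast
qed

lemma gp_root:
  assumes "poly (gp n a) z = 0" shows "\<exists>i\<in>{1..n}. z = complex_of_real (a i)"
  using assms by (simp add: gp_def poly_gpoly)

lemma hp_root:
  assumes "poly (hp n a) z = 0" shows "\<exists>i\<in>{n+1..2*n}. z = complex_of_real (a i)"
  using assms by (simp add: hp_def poly_gpoly)

lemma sigma_kappa:
  fixes P0 P1 Q :: "complex poly"
  assumes sm: "strict_mono_on {1..2*n} a" and n2: "n \<ge> 2" and nz: "rf_nonzero (P0,P1,Q)"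
    and lQ: "P0 = smult l Q" and mQ: "gp n a * P1 = smult m Q" and m: "m \<noteq> 0"
    and DS: "\<And>p. p \<in> Sigma_pts n a \<Longrightarrow> D p = D_L n a p + zorder (Psi n a l m p) 0"
    and Dsig: "\<And>p. D (sigma_pt n p) = D p"
  shows "cnj (l / m) = (-1)^n * (l / m)"
proof (cases "l = 0")
  case True then show ?thesis by simp
next
  case False
  have n: "n \<ge> 1" using n2 by simp
  define k where "k = l / m"
  have k0: "k \<noteq> 0" using False m by (simp add: k_def)
  have lk: "l = k * m" using m by (simp add: k_def)
  define Pk where "Pk = smult (k^2) (gp n a) - hp n a"
  have i1: "1 \<in> {1..n}" "2 \<in> {1..n}" using n2 by auto
  have g1: "poly (gp n a) (complex_of_real (a 1)) = 0" "poly (gp n a) (complex_of_real (a 2)) = 0"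
    using i1 by (auto simp: gp_def poly_gpoly)
  have "poly Pk (complex_of_real (a 1)) \<noteq> poly Pk (complex_of_real (a 2))"
    using hq_a12[OF sm n2] g1 by (simp add: Pk_def poly_hp_hq)
  then have "\<not> constant (poly Pk)" unfolding constant_def by blast
  then obtain z0 where z0: "poly Pk z0 = 0" using fundamental_theorem_of_algebra by blast
  then have kgh: "k^2 * poly (gp n a) z0 = poly (hp n a) z0" by (simp add: Pk_def)
  have g0: "poly (gp n a) z0 \<noteq> 0"
  proof
    assume g: "poly (gp n a) z0 = 0"
    then obtain i where i: "i \<in> {1..n}" "z0 = complex_of_real (a i)" using gp_root by blast
    have "poly (hp n a) z0 = 0" using kgh g by simp
    then obtain j where j: "j \<in> {n+1..2*n}" "z0 = complex_of_real (a j)" using hp_root by blast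
    have "i = j" using a_inj_c[OF sm, of i j] i j by auto
    then show False using i j by auto
  qed
  define v0 where "v0 = - k * poly (gp n a) z0"
  have v0nz: "v0 \<noteq> 0" using k0 g0 by (simp add: v0_def)
  have v0sq: "v0^2 = hf n a z0"
    unfolding hf_split v0_def using kgh by (simp add: power2_eq_square algebra_simps)
  have ps: "Aff v0 z0 \<in> Sigma_pts n a" using v0sq by (simp add: Sigma_pts_def)
  have "l + m * v0 / poly (gp n a) z0 = 0" using g0 by (simp add: v0_def lk)
  then have "zorder (Psi n a l m (Aff v0 z0)) 0 \<noteq> 0"
    using reg_zorder[OF sm n nz lQ mQ v0nz v0sq g0] by simp
  then have Dp: "D (Aff v0 z0) \<noteq> 0" using DS[OF ps] DL_A[OF v0nz] by simp
  define v1 where "v1 = (-1)^n * cnj v0"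
  have v1nz: "v1 \<noteq> 0" using v0nz by (simp add: v1_def)
  have v1sq: "v1^2 = hf n a (cnj z0)"
  proof -
    have "v1^2 = ((-1)^n)^2 * (cnj v0)^2" by (simp add: v1_def power_mult_distrib)
    also have "\<dots> = cnj (v0^2)" by (simp add: power_mult[symmetric] mult.commute)
    finally show ?thesis using v0sq cnj_hf by simp
  qed
  have g1': "poly (gp n a) (cnj z0) \<noteq> 0" using g0 cnj_gp[of n a z0] by (metis complex_cnj_zero_iff)
  have sp: "sigma_pt n (Aff v0 z0) = Aff v1 (cnj z0)" by (simp add: v1_def)
  have ps1: "Aff v1 (cnj z0) \<in> Sigma_pts n a" using v1sq by (simp add: Sigma_pts_def)
  have "D (Aff v1 (cnj z0)) \<noteq> 0" using Dsig[of "Aff v0 z0"] Dp sp by simp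
  then have "zorder (Psi n a l m (Aff v1 (cnj z0))) 0 \<noteq> 0" using DS[OF ps1] DL_A[OF v1nz] by simp
  then have "l + m * v1 / poly (gp n a) (cnj z0) = 0"
    using reg_zorder[OF sm n nz lQ mQ v1nz v1sq g1'] by simp
  then have "k * m + m * ((-1)^n * (- cnj k * cnj (poly (gp n a) z0))) / cnj (poly (gp n a) z0) = 0"
    by (simp add: lk v1_def v0_def cnj_gp)
  then have "m * (k - (-1)^n * cnj k) = 0"
    using g0 by (simp add: field_simps)
  then have "k = (-1)^n * cnj k" using m by simp
  then have "cnj k = (-1)^n * k"
    by (metis (no_types, lifting) mult.assoc mult_1 power_mult_distrib square_eq_1_iff power2_eq_square
        minus_one_mult_self mult.commute)
  then show ?thesis by (simp add: k_def)
qed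

lemma main_l0:
  fixes P0 P1 Q :: "complex poly"
  assumes sm: "strict_mono_on {1..2*n} a" and n: "n \<ge> 1" and nz: "rf_nonzero (P0,P1,Q)"
    and lQ: "P0 = smult 0 Q" and mQ: "gp n a * P1 = smult m Q" and m: "m \<noteq> 0"
    and DS: "\<And>p. p \<in> Sigma_pts n a \<Longrightarrow> D p = D_L n a p + zorder (Psi n a 0 m p) 0"
  shows "\<exists>q \<in> central_circle n a. D q = 1 \<and> (\<forall>q' \<in> central_circle n a. D q' \<noteq> 0 \<longrightarrow> q' = q)"
proof -
  have i: "n+1 \<in> {1..2*n}" "n \<in> {1..2*n}" using n by auto
  have qc: "ram_pt a (n+1) \<in> central_circle n a" by (rule ram_in_circle(2)[OF sm n])
  then have qs: "ram_pt a (n+1) \<in> Sigma_pts n a" by (simp add: central_circle_def)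
  have rnc: "ram_pt a n \<in> central_circle n a" by (rule ram_in_circle(1)[OF sm n])
  then have rns: "ram_pt a n \<in> Sigma_pts n a" by (simp add: central_circle_def)
  have "D (ram_pt a (n+1)) = 1"
    using DS[OF qs] DL_ram[OF sm i(1)] ram_np1_zorder(2)[OF sm n, of 0 m] m by simp
  moreover have "q' = ram_pt a (n+1)" if q': "q' \<in> central_circle n a" "D q' \<noteq> 0" for q'
  proof -
    consider "q' = ram_pt a n" | "q' = ram_pt a (n+1)"
      | (int) v x where "q' = Aff v (complex_of_real x)" "a n < x" "x < a (n+1)" "v^2 = hf n a (complex_of_real x)"
      using circle_cases[OF sm n q'(1)] by blast
    then show ?thesis
    proof cases
      case 1
      have "D q' = 0" using DS[OF rns] DL_ram[OF sm i(2)] ram_n_zorder[OF sm n m, of 0] 1 by simp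
      then show ?thesis using q'(2) by simp
    next
      case 2 then show ?thesis .
    next
      case int
      have hz: "hf n a (complex_of_real x) \<noteq> 0" and gz: "poly (gp n a) (complex_of_real x) \<noteq> 0"
        using interior_nz[OF sm n int(2,3)] by auto
      have v: "v \<noteq> 0" using hz int(4) by auto
      have ps: "q' \<in> Sigma_pts n a" using q'(1) by (simp add: central_circle_def)
      have "0 + m * v / poly (gp n a) (complex_of_real x) \<noteq> 0" using m v gz by simp
      then have "zorder (Psi n a 0 m q') 0 = 0"
        using reg_zorder[OF sm n nz lQ mQ v int(4) gz] int(1) by simp
      then have "D q' = 0" using DS[OF ps] DL_A[OF v] int(1) by simp
      then show ?thesis using q'(2) by simp
    qed
  qed
  ultimately show ?thesis using qc by blast
qed

lemma main_l:
  fixes P0 P1 Q :: "complex poly"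
  assumes sm: "strict_mono_on {1..2*n} a" and n: "n \<ge> 1" and nz: "rf_nonzero (P0,P1,Q)"
    and lQ: "P0 = smult l Q" and mQ: "gp n a * P1 = smult m Q" and m: "m \<noteq> 0" and l: "l \<noteq> 0"
    and DS: "\<And>p. p \<in> Sigma_pts n a \<Longrightarrow> D p = D_L n a p + zorder (Psi n a l m p) 0"
    and sig: "cnj (l / m) = (-1)^n * (l / m)"
  shows "\<exists>q \<in> central_circle n a. D q = 1 \<and> (\<forall>q' \<in> central_circle n a. D q' \<noteq> 0 \<longrightarrow> q' = q)"
proof -
  have i: "n+1 \<in> {1..2*n}" "n \<in> {1..2*n}" using n by auto
  define k where "k = l / m"
  have k0: "k \<noteq> 0" using l m by (simp add: k_def)
  have lk: "l = k * m" using m by (simp add: k_def)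
  define c where "c = (cmod k)^2"
  have c: "c > 0" using k0 by (simp add: c_def)
  have sgn2: "((-1::complex)^n) * ((-1)^n) = 1" by (simp flip: power_mult_distrib)
  have kc: "k^2 = (-1)^n * complex_of_real c"
  proof -
    have "complex_of_real c = k * cnj k" unfolding c_def by (rule complex_norm_square)
    also have "\<dots> = (-1)^n * k^2" using sig by (simp add: k_def power2_eq_square)
    finally have "complex_of_real c = (-1)^n * k^2" .
    then have "(-1)^n * complex_of_real c = ((-1)^n * (-1)^n) * k^2" by simp
    then show ?thesis using sgn2 by simp
  qed
  obtain x0 where x0: "a n < x0" "x0 < a (n+1)" "rho n a c x0 = 0"
    and uniq: "\<And>x. a n \<le> x \<Longrightarrow> x \<le> a (n+1) \<Longrightarrow> rho n a c x = 0 \<Longrightarrow> x = x0"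
    using rho_root[OF sm n c] by blast
  define z0 where "z0 = complex_of_real x0"
  have hz0: "hf n a z0 \<noteq> 0" and g0: "poly (gp n a) z0 \<noteq> 0"
    using interior_nz[OF sm n x0(1,2)] by (auto simp: z0_def)
  have cg: "complex_of_real c * poly (gp n a) z0 = poly (hq n a) z0"
  proof -
    have "poly (Pc n a c) z0 = 0" using x0(3) by (simp add: z0_def poly_Pc_real)
    then show ?thesis by (simp add: Pc_def)
  qed
  define v0 where "v0 = - k * poly (gp n a) z0"
  have v0nz: "v0 \<noteq> 0" using k0 g0 by (simp add: v0_def)
  have v0sq: "v0^2 = hf n a z0"
  proof -
    have "v0^2 = k^2 * poly (gp n a) z0 * poly (gp n a) z0" by (simp add: v0_def power2_eq_square)
    also have "\<dots> = poly (gp n a) z0 * ((-1)^n * (complex_of_real c * poly (gp n a) z0))" by (simp add: kc)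
    also have "\<dots> = poly (gp n a) z0 * poly (hp n a) z0" by (simp add: cg poly_hp_hq)
    finally show ?thesis by (simp add: hf_split)
  qed
  have qc: "Aff v0 z0 \<in> central_circle n a"
    using v0sq x0 by (auto simp: central_circle_def Sigma_pts_def z0_def)
  then have qs: "Aff v0 z0 \<in> Sigma_pts n a" by (simp add: central_circle_def)
  define R where "R = smult (m^2 * (-1)^n) (Pc n a c)"
  have Rid: "l^2 * poly (gp n a) z - m^2 * poly (hp n a) z = poly R z" for z
  proof -
    have "l^2 * poly (gp n a) z - m^2 * poly (hp n a) z = m^2 * (k^2 * poly (gp n a) z - poly (hp n a) z)"
      by (simp add: lk power_mult_distrib algebra_simps)
    also have "\<dots> = m^2 * (-1)^n * (complex_of_real c * poly (gp n a) z - poly (hq n a) z)"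
      by (simp add: kc poly_hp_hq algebra_simps)
    also have "\<dots> = poly R z" by (simp add: R_def Pc_def)
    finally show ?thesis .
  qed
  have Rnz: "m^2 * (-1)^n \<noteq> 0" using m by simp
  have oR: "order z0 R = 1"
    unfolding R_def order_smult[OF Rnz] z0_def by (rule order_Pc_root[OF sm n c x0])
  have "poly (Pc n a c) (complex_of_real (a n)) \<noteq> 0"
    unfolding poly_Pc_real of_real_eq_0_iff using rho_ends(1)[OF sm n c] by linarith
  then have R0: "R \<noteq> 0" using Rnz by (auto simp: R_def)
  obtain R2 where R2: "R = lf z0 ^ order z0 R * R2" "\<not> lf z0 dvd R2"
    using order_decomp[OF R0, of z0] by (auto simp: lf_def)
  have R2': "R = lf z0 * R2" using R2(1) oR by simp
  have R20: "poly R2 z0 \<noteq> 0" using R2(2) by (simp add: lf_def dvd_iff_poly_eq_0)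
  have zero: "l + m * v0 / poly (gp n a) z0 = 0" using g0 by (simp add: v0_def lk)
  have "zorder (Psi n a l m (Aff v0 z0)) 0 = 1"
    by (rule interior_zorder[OF v0nz v0sq g0 l zero Rid R2' R20])
  then have Dq: "D (Aff v0 z0) = 1" using DS[OF qs] DL_A[OF v0nz] by simp
  have rns: "ram_pt a n \<in> Sigma_pts n a" using ram_in_circle(1)[OF sm n] by (simp add: central_circle_def)
  have rn1s: "ram_pt a (n+1) \<in> Sigma_pts n a" using ram_in_circle(2)[OF sm n] by (simp add: central_circle_def)
  have "q' = Aff v0 z0" if q': "q' \<in> central_circle n a" "D q' \<noteq> 0" for q'
  proof -
    consider "q' = ram_pt a n" | "q' = ram_pt a (n+1)"
      | (int) v x where "q' = Aff v (complex_of_real x)" "a n < x" "x < a (n+1)" "v^2 = hf n a (complex_of_real x)"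
      using circle_cases[OF sm n q'(1)] by blast
    then show ?thesis
    proof cases
      case 1
      have "D q' = 0" using DS[OF rns] DL_ram[OF sm i(2)] ram_n_zorder[OF sm n m, of l] 1 by simp
      then show ?thesis using q'(2) by simp
    next
      case 2
      have "D q' = 0" using DS[OF rn1s] DL_ram[OF sm i(1)] ram_np1_zorder(1)[OF sm n l, of m] 2 by simp
      then show ?thesis using q'(2) by simp
    next
      case int
      define z where "z = complex_of_real x"
      have hz: "hf n a z \<noteq> 0" and gz: "poly (gp n a) z \<noteq> 0"
        using interior_nz[OF sm n int(2,3)] by (auto simp: z_def)
      have vsq: "v^2 = hf n a z" using int(4) by (simp add: z_def)
      have v: "v \<noteq> 0" using hz vsq by auto
      have ps: "q' \<in> Sigma_pts n a" using q'(1) by (simp add: central_circle_def)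
      have "zorder (Psi n a l m q') 0 \<noteq> 0" using DS[OF ps] DL_A[OF v] int(1) q'(2) by simp
      then have "l + m * v / poly (gp n a) z = 0"
        using reg_zorder[OF sm n nz lQ mQ v vsq gz] int(1) by (simp add: z_def)
      then have e1: "k * (m * poly (gp n a) z) = - (m * v)"
        using gz m by (simp add: lk field_simps add_eq_0_iff)
      then have "m * (k * poly (gp n a) z + v) = 0" by (simp add: algebra_simps)
      then have "k * poly (gp n a) z + v = 0" using m by simp
      then have vk: "v = - k * poly (gp n a) z" by (simp add: add_eq_0_iff)
      have "poly (gp n a) z * ((-1)^n * (complex_of_real c * poly (gp n a) z)) = poly (gp n a) z * poly (hp n a) z"
      proof -
        have "v^2 = k^2 * poly (gp n a) z * poly (gp n a) z" by (simp add: vk power2_eq_square)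
        also have "\<dots> = poly (gp n a) z * ((-1)^n * (complex_of_real c * poly (gp n a) z))"
          by (simp add: kc algebra_simps)
        finally have "poly (gp n a) z * ((-1)^n * (complex_of_real c * poly (gp n a) z)) = v^2" by simp
        also have "\<dots> = poly (gp n a) z * poly (hp n a) z" using vsq by (simp add: hf_split)
        finally show ?thesis .
      qed
      then have "(-1)^n * (complex_of_real c * poly (gp n a) z) = (-1)^n * poly (hq n a) z"
        using gz by (simp add: poly_hp_hq)
      then have "complex_of_real c * poly (gp n a) z = poly (hq n a) z" by simp
      then have "poly (Pc n a c) z = 0" by (simp add: Pc_def)
      then have "rho n a c x = 0" by (simp add: z_def poly_Pc_real)
      then have "x = x0" using uniq int(2,3) by simp
      then have "z = z0" by (simp add: z_def z0_def)
      then have "v = v0" using vk by (simp add: v0_def)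
      then show ?thesis using int(1) \<open>z = z0\<close> by (simp add: z_def)
    qed
  qed
  then show ?thesis using qc Dq by blast
qed

theorem proposition6p1:
  fixes n :: nat and a :: "nat \<Rightarrow> real" and D :: "spt \<Rightarrow> int"
  assumes "n \<ge> 2"
    and "strict_mono_on {1..2*n} a"
    and "D \<in> real_members n a"
  shows "\<exists>q \<in> central_circle n a. D q = 1 \<and>
           (\<forall>q' \<in> central_circle n a. D q' \<noteq> 0 \<longrightarrow> q' = q)"
proof -
  have n2: "n \<ge> 2" and sm: "strict_mono_on {1..2*n} a" using assms by auto
  have n: "n \<ge> 1" using n2 by simp
  obtain \<phi> where Dnn: "\<forall>p. 0 \<le> D p" and nzphi: "rf_nonzero \<phi>"
      and Deq: "D = (\<lambda>p. D_L n a p + div_of n a \<phi> p)" and Dsig: "\<forall>p. D (sigma_pt n p) = D p"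
    using assms(3) unfolding real_members_def pencil_members_def by blast
  obtain P0 P1 Q where phi: "\<phi> = (P0, P1, Q)" by (cases \<phi>) auto
  have nz: "rf_nonzero (P0,P1,Q)" using nzphi phi by simp
  have Q: "Q \<noteq> 0" using nz by simp
  have Dp: "D p = D_L n a p + ord_at n a (P0,P1,Q) p" if "p \<in> Sigma_pts n a" for p
    using that Deq phi by (simp add: div_of_def)
  have pos: "0 \<le> D_L n a p + ord_at n a (P0,P1,Q) p" if "p \<in> Sigma_pts n a" for p
    using spec[OF Dnn, of p] Dp[OF that] by linarith
  obtain l m where lm: "l \<noteq> 0 \<or> m \<noteq> 0" "P0 = smult l Q" "gp n a * P1 = smult m Q"
    using classify[OF sm n nz pos] by blast
  have DS: "D p = D_L n a p + zorder (Psi n a l m p) 0" if "p \<in> Sigma_pts n a" for p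
    using Dp[OF that] D_formula[OF lm(2) lm(3) Q that] by simp
  show ?thesis
  proof (cases "m = 0")
    case True
    then have l: "l \<noteq> 0" using lm(1) by simp
    show ?thesis by (rule main_m0[OF sm n l]) (use DS True in simp)
  next
    case False
    have sig: "cnj (l / m) = (-1)^n * (l / m)"
      by (rule sigma_kappa[OF sm n2 nz lm(2) lm(3) False DS]) (use Dsig in auto)
    show ?thesis
    proof (cases "l = 0")
      case True
      have lQ: "P0 = smult 0 Q" using lm(2) True by simp
      show ?thesis by (rule main_l0[OF sm n nz lQ lm(3) False]) (use DS True in simp)
    next
      case l: False
      show ?thesis by (rule main_l[OF sm n nz lm(2) lm(3) False l DS sig])
    qed
  qed
qed


end
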